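(* Assume $\Delta=0$. Let $\mathcal O$ be a $\delta$-subring of $R$, $\alpha\in\mathfrak{gl}_n(\mathcal O)$, $u\in GL_n(R)$ with $\delta u=\alpha u^{(p)}$, and set $N_{u/\mathcal O}=N^\delta\cap\Sigma^0_{u/\mathcal O}$. 1) If the entries of one of the rows of $u$ are algebraically independent over $\mathcal O$, then $G_{u/\mathcal O}\subset N^\delta$, hence $G_{u/\mathcal O}=N_{u/\mathcal O}$. 2) If the entries of $u$ are algebraically independent over $\mathcal O$, then $G_{u/\mathcal O}=N^\delta\cap GL_n(\mathcal O)$. 3) If $\sigma$ is an $\mathcal O$-algebra automorphism of $\mathcal O[u]$ such that $\sigma(u)=uc$ with $c\in GL_n(\mathcal O)\cap G_u$, then $c\in G_{u/\mathcal O}$. 4) If $n=1$, then $G_{u/\mathcal O}\subset N^\delta=G^\delta$. 5) $\bigcap_{w\in GL_n(R)}G_w=N^\delta$.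
   Context: Let $p$ be an odd prime, $R$ the unique complete discrete valuation ring with maximal ideal $pR$ and residue field an algebraic closure of $\mathbb F_p$; $\phi$ the unique lift of Frobenius, $\delta a=(\phi(a)-a^p)/p$; on matrices $\phi,\delta$ act entrywise, $u^{(p)}=(u_{ij}^p)$. A $\delta$-subring is a subring of $R$ closed under $\delta$. $\mathcal O[u]$ is the subring generated by $\mathcal O$ and the entries of $u$. For $\Delta=0$ and $w\in GL_n(R)$, $G_w=\{v\in GL_n(R):(wv)^{(p)}=w^{(p)}\phi(v)\}$. $\mathcal O\{u\}$: subring generated by $\mathcal O$ and entries of $u,\delta u,\ldots$; $\tilde G_{u/\mathcal O}$: $\mathcal O$-algebra automorphisms $\sigma$ of $\mathcal O\{u\}$ commuting with $\delta$ with $u^{-1}\sigma(u)\in GL_n(\mathcal O)$; $G_{u/\mathcal O}$: image of $\sigma\mapsto u^{-1}\sigma(u)$ in $GL_n(\mathcal O)$. $I^0_{u/\mathcal O}$: kernel of $\mathcal O[x]\to R$, $x\mapsto u$ ($x$ an $n\times n$ matrix of indeterminates); $\Sigma^0_{u/\mathcal O}$: the set of $c\in GL_n(\mathcal O)$ such that the $\mathcal O$-automorphism $\sigma^0_c$ of $\mathcal O[x]$ with $\sigma^0_c(x)=xc$ satisfies $\sigma^0_c(I^0_{u/\mathcal O})=I^0_{u/\mathcal O}$. $R^\delta=\{\lambda:\delta\lambda=0\}$; $G^\delta$: elements of $GL_n(R)$ with all entries in $R^\delta$; $T$: diagonal matrices, $W$: permutation matrices, $N=WT$, $N^\delta=N\cap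 G^\delta$. *)

theory Defs
  imports "HOL-Analysis.Analysis" "HOL-Library.Poly_Mapping"
    "HOL-Computational_Algebra.Polynomial"
begin

text \<open>witt_frame p phi holds for a type 'a iff 'a is a complete discrete valuation ring
  with maximal ideal pR, residue field algebraically closed and algebraic over F_p
  (i.e. an algebraic closure of F_p), p an odd prime, and phi a ring endomorphism
  lifting Frobenius (phi a = a^p mod p).  These data determine R and phi uniquely.\<close>

definition witt_frame :: "nat \<Rightarrow> ('a::idom \<Rightarrow> 'a) \<Rightarrow> bool" where
  "witt_frame p \<phi> \<longleftrightarrow>
     prime p \<and> odd p
   \<and> (of_nat p :: 'a) \<noteq> 0 \<and> \<not> (of_nat p :: 'a) dvd 1
   \<and> (\<forall>a::'a. a \<noteq> 0 \<longrightarrow> (\<exists>k v. v dvd 1 \<and> a = of_nat p ^ k * v))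
   \<and> (\<forall>x::nat \<Rightarrow> 'a. (\<forall>k. of_nat p ^ k dvd x (Suc k) - x k)
         \<longrightarrow> (\<exists>y. \<forall>k. of_nat p ^ k dvd y - x k))
   \<and> (\<forall>f::'a poly. degree f \<ge> 1 \<and> lead_coeff f = 1 \<longrightarrow> (\<exists>a. of_nat p dvd poly f a))
   \<and> (\<forall>a::'a. \<exists>f::int poly. (\<exists>i. \<not> int p dvd coeff f i)
         \<and> of_nat p dvd poly (map_poly of_int f) a)
   \<and> \<phi> 1 = 1 \<and> (\<forall>a b. \<phi> (a + b) = \<phi> a + \<phi> b) \<and> (\<forall>a b. \<phi> (a * b) = \<phi> a * \<phi> b)
   \<and> (\<forall>a. of_nat p dvd \<phi> a - a ^ p)"

definition delta :: "nat \<Rightarrow> ('a::idom \<Rightarrow> 'a) \<Rightarrow> 'a \<Rightarrow> 'a" where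
  "delta p \<phi> a = (THE b. of_nat p * b = \<phi> a - a ^ p)"

definition is_subring :: "'a::comm_ring_1 set \<Rightarrow> bool" where
  "is_subring A \<longleftrightarrow> 0 \<in> A \<and> 1 \<in> A \<and> (\<forall>a\<in>A. \<forall>b\<in>A. a + b \<in> A \<and> a * b \<in> A \<and> - a \<in> A)"

definition delta_subring :: "nat \<Rightarrow> ('a::idom \<Rightarrow> 'a) \<Rightarrow> 'a set \<Rightarrow> bool" where
  "delta_subring p \<phi> \<O> \<longleftrightarrow> is_subring \<O> \<and> (\<forall>a\<in>\<O>. delta p \<phi> a \<in> \<O>)"

definition ring_gen :: "'a::comm_ring_1 set \<Rightarrow> 'a set \<Rightarrow> 'a set" where
  "ring_gen \<O> S = \<Inter>{A. is_subring A \<and> \<O> \<subseteq> A \<and> S \<subseteq> A}"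

definition mat_map :: "('a \<Rightarrow> 'b) \<Rightarrow> 'a^'n^'m \<Rightarrow> 'b^'n^'m" where
  "mat_map f A = (\<chi> i j. f (A $ i $ j))"

definition frob_pow :: "nat \<Rightarrow> 'a::comm_ring_1^'n^'m \<Rightarrow> 'a^'n^'m" where
  "frob_pow p A = mat_map (\<lambda>x. x ^ p) A"

definition entries :: "'a^'n^'m \<Rightarrow> 'a set" where
  "entries A = {A $ i $ j | i j. True}"

definition in_GL :: "'a::comm_ring_1 set \<Rightarrow> 'a^'n^'n \<Rightarrow> bool" where
  "in_GL \<O> A \<longleftrightarrow> (\<forall>i j. A $ i $ j \<in> \<O>)
     \<and> (\<exists>B. (\<forall>i j. B $ i $ j \<in> \<O>) \<and> A ** B = mat 1 \<and> B ** A = mat 1)"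

definition Gw :: "nat \<Rightarrow> ('a::idom \<Rightarrow> 'a) \<Rightarrow> 'a^'n^'n \<Rightarrow> ('a^'n^'n) set" where
  "Gw p \<phi> w = {v. in_GL UNIV v \<and> frob_pow p (w ** v) = frob_pow p w ** mat_map \<phi> v}"

definition Gdelta :: "nat \<Rightarrow> ('a::idom \<Rightarrow> 'a) \<Rightarrow> ('a^'n^'n) set" where
  "Gdelta p \<phi> = {v. in_GL UNIV v \<and> (\<forall>i j. delta p \<phi> (v $ i $ j) = 0)}"

definition is_perm_mat :: "'a::comm_ring_1^'n^'n \<Rightarrow> bool" where
  "is_perm_mat W \<longleftrightarrow> (\<exists>\<pi>. \<pi> permutes (UNIV :: 'n set)
      \<and> W = (\<chi> i j. if \<pi> i = j then 1 else 0))"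

definition is_diag :: "'a::comm_ring_1^'n^'n \<Rightarrow> bool" where
  "is_diag T \<longleftrightarrow> (\<forall>i j. i \<noteq> j \<longrightarrow> T $ i $ j = 0)"

definition Nmon :: "('a::comm_ring_1^'n^'n) set" where
  "Nmon = {W ** T | W T. is_perm_mat W \<and> is_diag T \<and> in_GL UNIV T}"

definition Ndelta :: "nat \<Rightarrow> ('a::idom \<Rightarrow> 'a) \<Rightarrow> ('a^'n^'n) set" where
  "Ndelta p \<phi> = Nmon \<inter> Gdelta p \<phi>"

type_synonym ('v, 'a) mpoly = "('v \<Rightarrow>\<^sub>0 nat) \<Rightarrow>\<^sub>0 'a"

definition mpeval :: "('v, 'a::comm_ring_1) mpoly \<Rightarrow> ('v \<Rightarrow> 'a) \<Rightarrow> 'a" where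
  "mpeval F x = (\<Sum>m\<in>Poly_Mapping.keys F. Poly_Mapping.lookup F m * (\<Prod>v\<in>Poly_Mapping.keys m. x v ^ Poly_Mapping.lookup m v))"

definition mp_over :: "'a::comm_ring_1 set \<Rightarrow> ('v, 'a) mpoly \<Rightarrow> bool" where
  "mp_over \<O> F \<longleftrightarrow> (\<forall>m. Poly_Mapping.lookup F m \<in> \<O>)"

definition mpX :: "'v \<Rightarrow> ('v, 'a::comm_ring_1) mpoly" where
  "mpX v = Poly_Mapping.single (Poly_Mapping.single v 1) 1"

definition mpC :: "'a::comm_ring_1 \<Rightarrow> ('v, 'a) mpoly" where
  "mpC a = Poly_Mapping.single 0 a"

definition mpsubst :: "('v \<Rightarrow> ('w, 'a::comm_ring_1) mpoly) \<Rightarrow> ('v, 'a) mpoly \<Rightarrow> ('w, 'a) mpoly" where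
  "mpsubst s F = (\<Sum>m\<in>Poly_Mapping.keys F. mpC (Poly_Mapping.lookup F m) * (\<Prod>v\<in>Poly_Mapping.keys m. s v ^ Poly_Mapping.lookup m v))"

text \<open>sigma^0_c: x \<mapsto> x c on \<O>[x], x = (x_ij) an n x n matrix of indeterminates\<close>
definition sigma0 :: "'a::comm_ring_1^'n^'n \<Rightarrow> ('n \<times> 'n, 'a) mpoly \<Rightarrow> ('n \<times> 'n, 'a) mpoly" where
  "sigma0 c = mpsubst (\<lambda>(i, j). \<Sum>k\<in>UNIV. mpX (i, k) * mpC (c $ k $ j))"

definition I0 :: "'a::comm_ring_1 set \<Rightarrow> 'a^'n^'n \<Rightarrow> ('n \<times> 'n, 'a) mpoly set" where
  "I0 \<O> u = {F. mp_over \<O> F \<and> mpeval F (\<lambda>(i, j). u $ i $ j) = 0}"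

definition Sigma0 :: "'a::comm_ring_1 set \<Rightarrow> 'a^'n^'n \<Rightarrow> ('a^'n^'n) set" where
  "Sigma0 \<O> u = {c. in_GL \<O> c \<and> sigma0 c ` I0 \<O> u = I0 \<O> u}"

definition alg_indep :: "'a::comm_ring_1 set \<Rightarrow> ('v \<Rightarrow> 'a) \<Rightarrow> bool" where
  "alg_indep \<O> x \<longleftrightarrow> (\<forall>F::('v, 'a) mpoly. mp_over \<O> F \<and> mpeval F x = 0 \<longrightarrow> F = 0)"

definition delta_gen :: "nat \<Rightarrow> ('a::idom \<Rightarrow> 'a) \<Rightarrow> 'a set \<Rightarrow> 'a^'n^'n \<Rightarrow> 'a set" where
  "delta_gen p \<phi> \<O> u = ring_gen \<O> (\<Union>k. entries (mat_map (delta p \<phi> ^^ k) u))"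

definition O_alg_aut :: "'a::comm_ring_1 set \<Rightarrow> 'a set \<Rightarrow> ('a \<Rightarrow> 'a) \<Rightarrow> bool" where
  "O_alg_aut \<O> A \<sigma> \<longleftrightarrow> bij_betw \<sigma> A A
     \<and> (\<forall>a\<in>A. \<forall>b\<in>A. \<sigma> (a + b) = \<sigma> a + \<sigma> b \<and> \<sigma> (a * b) = \<sigma> a * \<sigma> b)
     \<and> (\<forall>a\<in>\<O>. \<sigma> a = a)"

text \<open>tilde G_{u/\<O>}; sigma(u) = u c with c in GL_n(\<O>) expresses u^{-1} sigma(u) in GL_n(\<O>)\<close>
definition Gtilde :: "nat \<Rightarrow> ('a::idom \<Rightarrow> 'a) \<Rightarrow> 'a set \<Rightarrow> 'a^'n^'n \<Rightarrow> ('a \<Rightarrow> 'a) set" where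
  "Gtilde p \<phi> \<O> u = {\<sigma>. O_alg_aut \<O> (delta_gen p \<phi> \<O> u) \<sigma>
      \<and> (\<forall>a\<in>delta_gen p \<phi> \<O> u. \<sigma> (delta p \<phi> a) = delta p \<phi> (\<sigma> a))
      \<and> (\<exists>c. in_GL \<O> c \<and> mat_map \<sigma> u = u ** c)}"

definition Grel :: "nat \<Rightarrow> ('a::idom \<Rightarrow> 'a) \<Rightarrow> 'a set \<Rightarrow> 'a^'n^'n \<Rightarrow> ('a^'n^'n) set" where
  "Grel p \<phi> \<O> u = {c. \<exists>\<sigma>\<in>Gtilde p \<phi> \<O> u. mat_map \<sigma> u = u ** c}"

end

theory Submission
  imports Defs
begin


lemma sr_0: "is_subring A \<Longrightarrow> 0 \<in> A" by (simp add: is_subring_def)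
lemma sr_1: "is_subring A \<Longrightarrow> 1 \<in> A" by (simp add: is_subring_def)
lemma sr_add: "is_subring A \<Longrightarrow> a \<in> A \<Longrightarrow> b \<in> A \<Longrightarrow> a + b \<in> A" by (simp add: is_subring_def)
lemma sr_mult: "is_subring A \<Longrightarrow> a \<in> A \<Longrightarrow> b \<in> A \<Longrightarrow> a * b \<in> A" by (simp add: is_subring_def)
lemma sr_uminus: "is_subring A \<Longrightarrow> a \<in> A \<Longrightarrow> - a \<in> A" by (simp add: is_subring_def)
lemma sr_diff: "is_subring A \<Longrightarrow> a \<in> A \<Longrightarrow> b \<in> A \<Longrightarrow> a - b \<in> A"
  using sr_add[of A a "-b"] sr_uminus[of A b] by simp

lemma sr_sum: "is_subring A \<Longrightarrow> (\<And>i. i \<in> S \<Longrightarrow> f i \<in> A) \<Longrightarrow> sum f S \<in> A"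
proof (induction S rule: infinite_finite_induct)
  case (infinite S) then show ?case by (simp add: sr_0)
next
  case empty then show ?case by (simp add: sr_0)
next
  case (insert x F) then show ?case by (simp add: sr_add)
qed

lemma sr_prod: "is_subring A \<Longrightarrow> (\<And>i. i \<in> S \<Longrightarrow> f i \<in> A) \<Longrightarrow> prod f S \<in> A"
proof (induction S rule: infinite_finite_induct)
  case (infinite S) then show ?case by (simp add: sr_1)
next
  case empty then show ?case by (simp add: sr_1)
next
  case (insert x F) then show ?case by (simp add: sr_mult)
qed

lemma sr_power: "is_subring A \<Longrightarrow> a \<in> A \<Longrightarrow> a ^ n \<in> A"
  by (induction n) (auto simp: sr_1 sr_mult)

lemma sr_of_nat: "is_subring A \<Longrightarrow> of_nat n \<in> A"
  by (induction n) (auto simp: sr_0 sr_1 sr_add)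

lemma sr_UNIV: "is_subring UNIV" by (simp add: is_subring_def)

lemma ring_gen_sr: "is_subring (ring_gen Ob S)"
  unfolding ring_gen_def is_subring_def by auto

lemma ring_gen_O: "Ob \<subseteq> ring_gen Ob S"
  unfolding ring_gen_def by auto

lemma ring_gen_S: "S \<subseteq> ring_gen Ob S"
  unfolding ring_gen_def by auto

lemma ring_gen_min: "is_subring A \<Longrightarrow> Ob \<subseteq> A \<Longrightarrow> S \<subseteq> A \<Longrightarrow> ring_gen Ob S \<subseteq> A"
  unfolding ring_gen_def by auto

definition hom_on :: "'a::comm_ring_1 set \<Rightarrow> ('a \<Rightarrow> 'a) \<Rightarrow> bool" where
  "hom_on A s \<longleftrightarrow> (\<forall>a\<in>A. \<forall>b\<in>A. s (a + b) = s a + s b \<and> s (a * b) = s a * s b)"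

lemma hom_add: "hom_on A s \<Longrightarrow> a \<in> A \<Longrightarrow> b \<in> A \<Longrightarrow> s (a + b) = s a + s b"
  by (simp add: hom_on_def)
lemma hom_mult: "hom_on A s \<Longrightarrow> a \<in> A \<Longrightarrow> b \<in> A \<Longrightarrow> s (a * b) = s a * s b"
  by (simp add: hom_on_def)
lemma hom_0: "hom_on A s \<Longrightarrow> is_subring A \<Longrightarrow> s 0 = 0"
  using hom_add[of A s 0 0] sr_0[of A] by simp
lemma hom_uminus: "hom_on A s \<Longrightarrow> is_subring A \<Longrightarrow> a \<in> A \<Longrightarrow> s (- a) = - s a"
  using hom_add[of A s a "-a"] hom_0[of A s] sr_uminus[of A a]
  by (simp add: eq_neg_iff_add_eq_0 add.commute)
lemma hom_diff: "hom_on A s \<Longrightarrow> is_subring A \<Longrightarrow> a \<in> A \<Longrightarrow> b \<in> A \<Longrightarrow> s (a - b) = s a - s b"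
  using hom_add[of A s a "-b"] hom_uminus[of A s b] sr_uminus[of A b] by simp

lemma hom_sum: "hom_on A s \<Longrightarrow> is_subring A \<Longrightarrow> (\<And>i. i \<in> S \<Longrightarrow> f i \<in> A)
   \<Longrightarrow> s (sum f S) = (\<Sum>i\<in>S. s (f i))"
proof (induction S rule: infinite_finite_induct)
  case (infinite S) then show ?case by (simp add: hom_0)
next
  case empty then show ?case by (simp add: hom_0)
next
  case (insert x F) then show ?case by (simp add: hom_add sr_sum)
qed

lemma hom_prod: "hom_on A s \<Longrightarrow> is_subring A \<Longrightarrow> s 1 = 1 \<Longrightarrow> (\<And>i. i \<in> S \<Longrightarrow> f i \<in> A)
   \<Longrightarrow> s (prod f S) = (\<Prod>i\<in>S. s (f i))"
proof (induction S rule: infinite_finite_induct)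
  case (infinite S) then show ?case by simp
next
  case empty then show ?case by simp
next
  case (insert x F) then show ?case by (simp add: hom_mult sr_prod)
qed

lemma hom_power: "hom_on A s \<Longrightarrow> is_subring A \<Longrightarrow> s 1 = 1 \<Longrightarrow> a \<in> A \<Longrightarrow> s (a ^ n) = s a ^ n"
  by (induction n) (auto simp: hom_mult sr_power)

lemma hom_of_nat: "hom_on A s \<Longrightarrow> is_subring A \<Longrightarrow> s 1 = 1 \<Longrightarrow> s (of_nat n) = of_nat n"
  by (induction n) (auto simp: hom_add hom_0 sr_of_nat sr_1)

section \<open>Consequences of witt_frame\<close>

lemma wf_D:
  assumes "witt_frame p (\<phi>::'a::idom\<Rightarrow>'a)"
  shows wf_prime: "prime p" and wf_odd: "odd p" and wf_p_nz: "(of_nat p :: 'a) \<noteq> 0"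
    and wf_p_nunit: "\<not> (of_nat p :: 'a) dvd 1"
    and wf_phi1: "\<phi> 1 = 1" and wf_phi_add: "\<phi> (a + b) = \<phi> a + \<phi> b"
    and wf_phi_mult: "\<phi> (a * b) = \<phi> a * \<phi> b"
    and wf_dvd: "of_nat p dvd \<phi> a - a ^ p"
    and wf_val: "a \<noteq> 0 \<Longrightarrow> \<exists>k v. v dvd 1 \<and> a = of_nat p ^ k * v"
proof -
  note D = assms[unfolded witt_frame_def]
  show "prime p" using D by (elim conjE) assumption
  show "odd p" using D by (elim conjE) assumption
  show "(of_nat p :: 'a) \<noteq> 0" using D by (elim conjE) assumption
  show "\<not> (of_nat p :: 'a) dvd 1" using D by (elim conjE) assumption
  show "\<phi> 1 = 1" using D by (elim conjE) assumption
  have H1: "\<forall>a b. \<phi> (a + b) = \<phi> a + \<phi> b" using D by (elim conjE) assumption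
  then show "\<phi> (a + b) = \<phi> a + \<phi> b" by blast
  have H2: "\<forall>a b. \<phi> (a * b) = \<phi> a * \<phi> b" using D by (elim conjE) assumption
  then show "\<phi> (a * b) = \<phi> a * \<phi> b" by blast
  have H3: "\<forall>a. of_nat p dvd \<phi> a - a ^ p" using D by (elim conjE) assumption
  then show "of_nat p dvd \<phi> a - a ^ p" by blast
  have H4: "\<forall>a::'a. a \<noteq> 0 \<longrightarrow> (\<exists>k v. v dvd 1 \<and> a = of_nat p ^ k * v)"
    using D by (elim conjE) assumption
  then show "a \<noteq> 0 \<Longrightarrow> \<exists>k v. v dvd 1 \<and> a = of_nat p ^ k * v" by blast
qed

lemma wf_p_gt1: "witt_frame p \<phi> \<Longrightarrow> p > 1" using wf_prime prime_gt_1_nat by metis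
lemma wf_hom: "witt_frame p \<phi> \<Longrightarrow> hom_on UNIV \<phi>" unfolding hom_on_def using wf_phi_add wf_phi_mult by metis
lemma wf_phi0: "witt_frame p \<phi> \<Longrightarrow> \<phi> 0 = 0" using hom_0[OF wf_hom sr_UNIV] .

lemma delta_eq:
  assumes "witt_frame p (\<phi>::'a::idom\<Rightarrow>'a)"
  shows "of_nat p * delta p \<phi> a = \<phi> a - a ^ p"
proof -
  from wf_dvd[OF assms] have "of_nat p dvd \<phi> a - a ^ p" .
  then obtain b where b: "\<phi> a - a ^ p = of_nat p * b" by (auto elim: dvdE)
  have "(THE b. of_nat p * b = \<phi> a - a ^ p) = b"
    using b wf_p_nz[OF assms] by (intro the_equality) auto
  then show ?thesis using b by (simp add: delta_def)
qed

lemma phi_eq: "witt_frame p \<phi> \<Longrightarrow> \<phi> a = a ^ p + of_nat p * delta p \<phi> a"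
  using delta_eq[of p \<phi> a] by (simp add: algebra_simps)

lemma delta_unique:
  assumes "witt_frame p (\<phi>::'a::idom\<Rightarrow>'a)" "of_nat p * b = \<phi> a - a ^ p"
  shows "delta p \<phi> a = b"
proof -
  have "of_nat p * delta p \<phi> a = of_nat p * b" using delta_eq[OF assms(1), of a] assms(2) by simp
  then show ?thesis using wf_p_nz[OF assms(1)] by simp
qed

lemma delta_zero_iff:
  assumes "witt_frame p (\<phi>::'a::idom\<Rightarrow>'a)"
  shows "delta p \<phi> a = 0 \<longleftrightarrow> \<phi> a = a ^ p"
  using delta_eq[OF assms, of a] wf_p_nz[OF assms] by auto

lemma wf_pdiv_zero:
  assumes "witt_frame p (\<phi>::'a::idom\<Rightarrow>'a)" "\<forall>k. (of_nat p :: 'a) ^ k dvd y"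
  shows "y = 0"
proof (rule ccontr)
  assume "y \<noteq> 0"
  with wf_val[OF assms(1)] obtain k v where v: "v dvd 1" "y = of_nat p ^ k * v"
    by blast
  from assms(2) have "(of_nat p :: 'a) ^ k * of_nat p dvd of_nat p ^ k * v"
    using v by (metis power_Suc2)
  then have "of_nat p dvd v" using wf_p_nz[OF assms(1)]
    by (subst (asm) dvd_mult_cancel_left) auto
  with v(1) have "(of_nat p :: 'a) dvd 1" using dvd_trans by blast
  with wf_p_nunit[OF assms(1)] show False by simp
qed

lemma pow_le_aux:
  fixes q :: "'a::idom"
  assumes "q \<noteq> 0" "\<not> q dvd 1" "q ^ k = q ^ m"
  shows "k \<le> m"
proof (rule ccontr)
  assume "\<not> k \<le> m"
  then obtain d where d: "k = m + Suc d" by (metis add_Suc_right le_add1 less_imp_Suc_add not_le)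
  have "q ^ m * q ^ Suc d = q ^ m * 1" using assms(3) unfolding d power_add by simp
  then have "q ^ Suc d = 1" using assms(1) by (simp only: mult_cancel_left power_eq_0_iff) simp
  then have "q dvd 1" unfolding power_Suc by (metis dvd_triv_left)
  with assms(2) show False by contradiction
qed

lemma wf_infinite:
  assumes "witt_frame p (\<phi>::'a::idom\<Rightarrow>'a)"
  shows "infinite (UNIV :: 'a set)"
proof -
  let ?q = "(of_nat p :: 'a)"
  have inj: "inj (\<lambda>k::nat. ?q ^ k)"
  proof (rule injI)
    fix k m :: nat assume eq: "?q ^ k = ?q ^ m"
    have "k \<le> m" using pow_le_aux[OF wf_p_nz[OF assms] wf_p_nunit[OF assms] eq] .
    moreover have "m \<le> k" using pow_le_aux[OF wf_p_nz[OF assms] wf_p_nunit[OF assms] eq[symmetric]] .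
    ultimately show "k = m" by (rule antisym)
  qed
  show ?thesis
  proof
    assume "finite (UNIV :: 'a set)"
    then have "finite (range (\<lambda>k::nat. ?q ^ k))" by (rule finite_subset[OF subset_UNIV])
    then have "finite (UNIV :: nat set)" by (rule finite_imageD[OF _ inj])
    then show False by simp
  qed
qed


section \<open>Multivariate polynomial evaluation\<close>

definition mon :: "('v \<Rightarrow> 'b::comm_ring_1) \<Rightarrow> ('v \<Rightarrow>\<^sub>0 nat) \<Rightarrow> 'b" where
  "mon x m = (\<Prod>v\<in>Poly_Mapping.keys m. x v ^ Poly_Mapping.lookup m v)"

definition evalh :: "('a::comm_ring_1 \<Rightarrow> 'b::comm_ring_1) \<Rightarrow> ('v \<Rightarrow> 'b) \<Rightarrow> ('v, 'a) mpoly \<Rightarrow> 'b" where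
  "evalh h x F = (\<Sum>m\<in>Poly_Mapping.keys F. h (Poly_Mapping.lookup F m) * mon x m)"

definition rhom :: "('a::comm_ring_1 \<Rightarrow> 'b::comm_ring_1) \<Rightarrow> bool" where
  "rhom h \<longleftrightarrow> h 0 = 0 \<and> h 1 = 1 \<and> (\<forall>a b. h (a + b) = h a + h b \<and> h (a * b) = h a * h b)"

lemma rhom_id: "rhom (\<lambda>a. a)" by (simp add: rhom_def)

lemma mpC_add: "mpC (a + b) = mpC a + mpC b" by (simp add: mpC_def single_add)
lemma mpC_mult: "mpC (a * b) = mpC a * mpC b" by (simp add: mpC_def mult_single)
lemma mpC_0: "mpC 0 = 0" by (simp add: mpC_def)
lemma mpC_1: "mpC 1 = 1" by (simp add: mpC_def)

lemma rhom_mpC: "rhom mpC" by (simp add: rhom_def mpC_add mpC_mult mpC_0 mpC_1)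

lemma mon_superset:
  assumes "finite S" "Poly_Mapping.keys m \<subseteq> S"
  shows "mon x m = (\<Prod>v\<in>S. x v ^ Poly_Mapping.lookup m v)"
  unfolding mon_def
  by (rule prod.mono_neutral_left[OF assms(1) assms(2)]) (simp add: in_keys_iff)

lemma mon_add: "mon x (m1 + m2) = mon x m1 * mon x m2"
proof -
  let ?S = "Poly_Mapping.keys m1 \<union> Poly_Mapping.keys m2"
  have f: "finite ?S" by simp
  have "mon x (m1 + m2) = (\<Prod>v\<in>?S. x v ^ Poly_Mapping.lookup (m1 + m2) v)"
    by (rule mon_superset[OF f keys_add])
  also have "\<dots> = (\<Prod>v\<in>?S. x v ^ Poly_Mapping.lookup m1 v * x v ^ Poly_Mapping.lookup m2 v)"
    by (simp add: lookup_add power_add)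
  also have "\<dots> = (\<Prod>v\<in>?S. x v ^ Poly_Mapping.lookup m1 v) * (\<Prod>v\<in>?S. x v ^ Poly_Mapping.lookup m2 v)"
    by (rule prod.distrib)
  also have "\<dots> = mon x m1 * mon x m2"
    using mon_superset[OF f, of m1 x] mon_superset[OF f, of m2 x] by simp
  finally show ?thesis .
qed

lemma mon_zero: "mon x 0 = 1" by (simp add: mon_def)

lemma mon_single: "mon x (Poly_Mapping.single v n) = x v ^ n"
  by (cases "n = 0") (simp_all add: mon_def)

lemma evalh_zero: "evalh h x 0 = 0" by (simp add: evalh_def)

lemma evalh_single: "rhom h \<Longrightarrow> evalh h x (Poly_Mapping.single m a) = h a * mon x m"
  by (cases "a = 0") (simp_all add: evalh_def rhom_def)

lemma evalh_add: "rhom h \<Longrightarrow> evalh h x (F + G) = evalh h x F + evalh h x G"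
  unfolding evalh_def
  by (rule setsum_keys_plus_distrib) (simp_all add: rhom_def distrib_right)

lemma evalh_sum: "rhom h \<Longrightarrow> evalh h x (sum f S) = (\<Sum>i\<in>S. evalh h x (f i))"
  by (induction S rule: infinite_finite_induct) (simp_all add: evalh_zero evalh_add)

lemma evalh_uminus: "rhom h \<Longrightarrow> evalh h x (- F) = - evalh h x F"
proof -
  assume r: "rhom h"
  have "evalh h x (- F) + evalh h x F = 0"
    using evalh_add[OF r, of x "-F" F] by (simp add: evalh_zero)
  then show ?thesis by (simp add: eq_neg_iff_add_eq_0)
qed

lemma evalh_diff: "rhom h \<Longrightarrow> evalh h x (F - G) = evalh h x F - evalh h x G"
  using evalh_add[of h x F "-G"] evalh_uminus[of h x G] by simp

lemma pm_decomp: "(F :: 'k \<Rightarrow>\<^sub>0 'b::comm_monoid_add) = (\<Sum>m\<in>Poly_Mapping.keys F. Poly_Mapping.single m (Poly_Mapping.lookup F m))"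
proof (rule poly_mapping_eqI)
  fix k
  have "Poly_Mapping.lookup (\<Sum>m\<in>Poly_Mapping.keys F. Poly_Mapping.single m (Poly_Mapping.lookup F m)) k
     = (\<Sum>m\<in>Poly_Mapping.keys F. (Poly_Mapping.lookup F m when m = k))"
    by (simp add: lookup_sum lookup_single)
  also have "\<dots> = Poly_Mapping.lookup F k"
    by (cases "k \<in> Poly_Mapping.keys F") (simp_all add: when_def in_keys_iff)
  finally show "Poly_Mapping.lookup F k = Poly_Mapping.lookup (\<Sum>m\<in>Poly_Mapping.keys F. Poly_Mapping.single m (Poly_Mapping.lookup F m)) k" by simp
qed

lemma pm_mult_expand:
  "(F :: ('k::comm_monoid_add) \<Rightarrow>\<^sub>0 'b::comm_ring_1) * G =
    (\<Sum>m\<in>Poly_Mapping.keys F. \<Sum>m'\<in>Poly_Mapping.keys G.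
       Poly_Mapping.single (m + m') (Poly_Mapping.lookup F m * Poly_Mapping.lookup G m'))"
proof -
  have "F * G = (\<Sum>m\<in>Poly_Mapping.keys F. Poly_Mapping.single m (Poly_Mapping.lookup F m)) *
                (\<Sum>m'\<in>Poly_Mapping.keys G. Poly_Mapping.single m' (Poly_Mapping.lookup G m'))"
    using pm_decomp[of F] pm_decomp[of G] by simp
  also have "\<dots> = (\<Sum>m\<in>Poly_Mapping.keys F. \<Sum>m'\<in>Poly_Mapping.keys G.
       Poly_Mapping.single m (Poly_Mapping.lookup F m) * Poly_Mapping.single m' (Poly_Mapping.lookup G m'))"
    by (rule sum_product)
  also have "\<dots> = (\<Sum>m\<in>Poly_Mapping.keys F. \<Sum>m'\<in>Poly_Mapping.keys G.
       Poly_Mapping.single (m + m') (Poly_Mapping.lookup F m * Poly_Mapping.lookup G m'))"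
    by (simp add: mult_single)
  finally show ?thesis .
qed

lemma evalh_mult: "rhom h \<Longrightarrow> evalh h x (F * G) = evalh h x F * evalh h x G"
proof -
  assume r: "rhom h"
  have "evalh h x (F * G) = (\<Sum>m\<in>Poly_Mapping.keys F. \<Sum>m'\<in>Poly_Mapping.keys G.
       h (Poly_Mapping.lookup F m * Poly_Mapping.lookup G m') * mon x (m + m'))"
    by (subst pm_mult_expand) (simp add: evalh_sum[OF r] evalh_single[OF r])
  also have "\<dots> = (\<Sum>m\<in>Poly_Mapping.keys F. \<Sum>m'\<in>Poly_Mapping.keys G.
       (h (Poly_Mapping.lookup F m) * mon x m) * (h (Poly_Mapping.lookup G m') * mon x m'))"
    using r by (simp add: rhom_def mon_add algebra_simps)
  also have "\<dots> = evalh h x F * evalh h x G"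
    unfolding evalh_def by (rule sum_product[symmetric])
  finally show ?thesis .
qed

lemma evalh_one: 
  fixes h :: "'a::comm_ring_1 \<Rightarrow> 'b::comm_ring_1" and x :: "'v \<Rightarrow> 'b"
  shows "rhom h \<Longrightarrow> evalh h x 1 = 1"
proof -
  assume r: "rhom h"
  have "(1 :: ('v, 'a) mpoly) = Poly_Mapping.single 0 1" by simp
  then have "evalh h x (1 :: ('v, 'a) mpoly) = h 1 * mon x 0" using evalh_single[OF r, of x 0 1] by simp
  then show ?thesis using r by (simp add: rhom_def mon_zero)
qed

lemma evalh_prod: "rhom h \<Longrightarrow> evalh h x (prod f S) = (\<Prod>i\<in>S. evalh h x (f i))"
  by (induction S rule: infinite_finite_induct) (simp_all add: evalh_one evalh_mult)

lemma evalh_power: "rhom h \<Longrightarrow> evalh h x (F ^ n) = evalh h x F ^ n"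
  by (induction n) (simp_all add: evalh_one evalh_mult)

lemma evalh_mpX: "rhom h \<Longrightarrow> evalh h x (mpX v) = x v"
  unfolding mpX_def by (simp add: evalh_single mon_single rhom_def)

lemma evalh_mpC: "rhom h \<Longrightarrow> evalh h x (mpC a) = h a"
  unfolding mpC_def by (simp add: evalh_single mon_zero)

lemma mpeval_evalh: "mpeval F x = evalh (\<lambda>a. a) x F"
  by (simp add: mpeval_def evalh_def mon_def)

lemma mpsubst_evalh: "mpsubst s F = evalh mpC s F"
  by (simp add: mpsubst_def evalh_def mon_def)

lemma evalh_comp:
  assumes r: "rhom h"
  shows "evalh h x (evalh mpC s F) = evalh h (\<lambda>v. evalh h x (s v)) F"
proof -
  have "evalh h x (evalh mpC s F) = (\<Sum>m\<in>Poly_Mapping.keys F. evalh h x (mpC (Poly_Mapping.lookup F m) * mon s m))"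
    unfolding evalh_def[of mpC] by (rule evalh_sum[OF r])
  also have "\<dots> = (\<Sum>m\<in>Poly_Mapping.keys F. h (Poly_Mapping.lookup F m) * mon (\<lambda>v. evalh h x (s v)) m)"
    by (simp add: evalh_mult[OF r] evalh_mpC[OF r] mon_def evalh_prod[OF r] evalh_power[OF r])
  finally show ?thesis unfolding evalh_def[of h _ F] .
qed

lemma mpX_power: "mpX v ^ n = Poly_Mapping.single (Poly_Mapping.single v n) (1::'a::comm_ring_1)"
  by (induction n) (simp_all add: mpX_def mult_single single_add[symmetric])

lemma single_prod: "finite S \<Longrightarrow> (\<Prod>i\<in>S. Poly_Mapping.single (f i) (1::'a::comm_ring_1)) = Poly_Mapping.single (\<Sum>i\<in>S. f i) 1"
  by (induction S rule: finite_induct) (simp_all add: mult_single)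

lemma mon_mpX: "mon mpX m = Poly_Mapping.single m (1::'a::comm_ring_1)"
proof -
  have "mon mpX m = (\<Prod>v\<in>Poly_Mapping.keys m. Poly_Mapping.single (Poly_Mapping.single v (Poly_Mapping.lookup m v)) (1::'a))"
    by (simp add: mon_def mpX_power)
  also have "\<dots> = Poly_Mapping.single (\<Sum>v\<in>Poly_Mapping.keys m. Poly_Mapping.single v (Poly_Mapping.lookup m v)) 1"
    by (simp add: single_prod)
  also have "\<dots> = Poly_Mapping.single m 1" using pm_decomp[of m] by simp
  finally show ?thesis .
qed

lemma evalh_expand: "evalh mpC mpX F = (F :: ('v, 'a::comm_ring_1) mpoly)"
proof -
  have "evalh mpC mpX F = (\<Sum>m\<in>Poly_Mapping.keys F. Poly_Mapping.single m (Poly_Mapping.lookup F m))"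
    unfolding evalh_def by (simp add: mon_mpX mpC_def mult_single)
  also have "\<dots> = F" using pm_decomp[of F] by simp
  finally show ?thesis .
qed

lemma mpo_single: "a \<in> Ob \<Longrightarrow> is_subring Ob \<Longrightarrow> mp_over Ob (Poly_Mapping.single m a)"
  by (simp add: mp_over_def lookup_single when_def sr_0)

lemma mpo_sum: "is_subring Ob \<Longrightarrow> (\<And>i. i \<in> S \<Longrightarrow> mp_over Ob (f i)) \<Longrightarrow> mp_over Ob (sum f S)"
  unfolding mp_over_def lookup_sum by (auto intro!: sr_sum)

lemma mpo_add: "is_subring Ob \<Longrightarrow> mp_over Ob F \<Longrightarrow> mp_over Ob G \<Longrightarrow> mp_over Ob (F + G)"
  by (simp add: mp_over_def lookup_add sr_add)

lemma mpo_uminus: "is_subring Ob \<Longrightarrow> mp_over Ob F \<Longrightarrow> mp_over Ob (- F)"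
  by (simp add: mp_over_def sr_uminus)

lemma mpo_diff: "is_subring Ob \<Longrightarrow> mp_over Ob F \<Longrightarrow> mp_over Ob G \<Longrightarrow> mp_over Ob (F - G)"
  by (simp add: mp_over_def lookup_minus sr_diff)

lemma mpo_mult:
  assumes "is_subring Ob" "mp_over Ob F" "mp_over Ob G"
  shows "mp_over Ob (F * G)"
proof -
  have "mp_over Ob (\<Sum>m\<in>Poly_Mapping.keys F. \<Sum>m'\<in>Poly_Mapping.keys G.
       Poly_Mapping.single (m + m') (Poly_Mapping.lookup F m * Poly_Mapping.lookup G m'))"
    apply (intro mpo_sum mpo_single sr_mult assms(1))
    using assms by (auto simp: mp_over_def)
  then show ?thesis by (subst pm_mult_expand)
qed

lemma mpo_one: "is_subring Ob \<Longrightarrow> mp_over Ob 1"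
  by (simp add: mp_over_def lookup_one when_def sr_0 sr_1)

lemma mpo_power: "is_subring Ob \<Longrightarrow> mp_over Ob F \<Longrightarrow> mp_over Ob (F ^ n)"
  by (induction n) (simp_all add: mpo_one mpo_mult)

lemma mpo_prod: "is_subring Ob \<Longrightarrow> (\<And>i. i \<in> S \<Longrightarrow> mp_over Ob (f i)) \<Longrightarrow> mp_over Ob (prod f S)"
  by (induction S rule: infinite_finite_induct) (simp_all add: mpo_one mpo_mult)

lemma mpo_mpX: "is_subring Ob \<Longrightarrow> mp_over Ob (mpX v)"
  by (simp add: mpX_def mpo_single sr_1)

lemma mpo_mpC: "is_subring Ob \<Longrightarrow> a \<in> Ob \<Longrightarrow> mp_over Ob (mpC a)"
  by (simp add: mpC_def mpo_single)

lemma mpo_subst: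
  assumes "is_subring Ob" "mp_over Ob F" "\<And>v. mp_over Ob (s v)"
  shows "mp_over Ob (evalh mpC s F)"
  unfolding evalh_def mon_def
  apply (intro mpo_sum mpo_mult mpo_mpC mpo_prod mpo_power assms(1) assms(3))
  using assms(2) by (auto simp: mp_over_def)

lemma mpeval_in:
  assumes "is_subring A" "mp_over A F" "\<And>v. x v \<in> A"
  shows "mpeval F x \<in> A"
  unfolding mpeval_def using assms
  by (auto intro!: sr_sum sr_mult sr_prod sr_power simp: mp_over_def)

lemma hom_mpeval:
  assumes "hom_on A s" "is_subring A" "s 1 = 1" "mp_over Ob F" "Ob \<subseteq> A" "\<And>a. a \<in> Ob \<Longrightarrow> s a = a"
    "\<And>v. x v \<in> A"
  shows "s (mpeval F x) = mpeval F (\<lambda>v. s (x v))"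
proof -
  have inA: "Poly_Mapping.lookup F m \<in> A" "Poly_Mapping.lookup F m \<in> Ob" for m
    using assms(4,5) by (auto simp: mp_over_def)
  show ?thesis
    unfolding mpeval_def using assms inA
    by (simp add: hom_sum hom_mult hom_prod hom_power sr_mult sr_prod sr_power)
qed


definition mfun :: "'a^'n^'m \<Rightarrow> ('m \<times> 'n \<Rightarrow> 'a)" where
  "mfun Y = (\<lambda>(i, j). Y $ i $ j)"

definition sc :: "'a::comm_ring_1^'n^'n \<Rightarrow> 'n \<times> 'n \<Rightarrow> ('n \<times> 'n, 'a) mpoly" where
  "sc c = (\<lambda>(i, j). \<Sum>k\<in>UNIV. mpX (i, k) * mpC (c $ k $ j))"

lemma sigma0_evalh: "sigma0 c F = evalh mpC (sc c) F"
  by (simp add: sigma0_def sc_def mpsubst_evalh)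

lemma mpC_sum: "mpC (sum f S) = (\<Sum>i\<in>S. mpC (f i))"
  by (induction S rule: infinite_finite_induct) (simp_all add: mpC_0 mpC_add)

lemma mpeval_sigma0:
  fixes c Y :: "'a::comm_ring_1^'n^'n"
  shows "mpeval (sigma0 c F) (mfun Y) = mpeval F (mfun (Y ** c))"
proof -
  have e: "(\<lambda>v. evalh (\<lambda>a. a) (mfun Y) (sc c v)) = mfun (Y ** c)"
  proof
    fix v :: "'n \<times> 'n"
    obtain i j where v: "v = (i, j)" by fastforce
    show "evalh (\<lambda>a. a) (mfun Y) (sc c v) = mfun (Y ** c) v"
      unfolding v sc_def
      by (simp add: evalh_sum[OF rhom_id] evalh_mult[OF rhom_id] evalh_mpX[OF rhom_id]
          evalh_mpC[OF rhom_id] mfun_def matrix_matrix_mult_def)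
  qed
  show ?thesis
    unfolding mpeval_evalh sigma0_evalh evalh_comp[OF rhom_id] e ..
qed

lemma sigma0_inv:
  fixes c c' :: "'a::comm_ring_1^'n^'n"
  assumes "c ** c' = mat 1"
  shows "sigma0 c (sigma0 c' F) = F"
proof -
  have e: "(\<lambda>v. evalh mpC (sc c) (sc c' v)) = mpX"
  proof
    fix v :: "'n \<times> 'n"
    obtain i j where v: "v = (i, j)" by fastforce
    have "evalh mpC (sc c) (sc c' v) = (\<Sum>k\<in>UNIV. (\<Sum>l\<in>UNIV. mpX (i, l) * mpC (c $ l $ k)) * mpC (c' $ k $ j))"
      unfolding v sc_def
      by (simp add: evalh_sum[OF rhom_mpC] evalh_mult[OF rhom_mpC] evalh_mpX[OF rhom_mpC]
          evalh_mpC[OF rhom_mpC] sc_def)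
    also have "\<dots> = (\<Sum>k\<in>UNIV. \<Sum>l\<in>UNIV. mpX (i, l) * mpC (c $ l $ k * c' $ k $ j))"
      by (simp add: sum_distrib_right mpC_mult mult.assoc)
    also have "\<dots> = (\<Sum>l\<in>UNIV. \<Sum>k\<in>UNIV. mpX (i, l) * mpC (c $ l $ k * c' $ k $ j))"
      by (rule sum.swap)
    also have "\<dots> = (\<Sum>l\<in>UNIV. mpX (i, l) * mpC ((c ** c') $ l $ j))"
      by (simp add: sum_distrib_left mpC_sum matrix_matrix_mult_def)
    also have "\<dots> = (\<Sum>l\<in>UNIV. mpX (i, l) * mpC (if l = j then 1 else 0))"
      by (simp add: assms mat_def)
    also have "\<dots> = mpX (i, j)"
      by (simp add: if_distrib mpC_0 mpC_1 cong: if_cong)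
    finally show "evalh mpC (sc c) (sc c' v) = mpX v" by (simp add: v)
  qed
  show ?thesis
    unfolding sigma0_evalh evalh_comp[OF rhom_mpC] e evalh_expand ..
qed

lemma mpo_sigma0:
  fixes c :: "'a::comm_ring_1^'n^'n"
  assumes "is_subring Ob" "mp_over Ob F" "\<And>k j. c $ k $ j \<in> Ob"
  shows "mp_over Ob (sigma0 c F)"
  unfolding sigma0_evalh
proof (rule mpo_subst[OF assms(1,2)])
  fix v :: "'n \<times> 'n"
  obtain i j where v: "v = (i, j)" by fastforce
  show "mp_over Ob (sc c v)"
    unfolding v sc_def split
    by (rule mpo_sum[OF assms(1)], rule mpo_mult[OF assms(1)], rule mpo_mpX[OF assms(1)],
        rule mpo_mpC[OF assms(1) assms(3)])
qed

lemma EI: "mp_over Ob F \<Longrightarrow> mpeval F y \<in> {mpeval G y | G. mp_over Ob G}"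
  by blast

lemma ring_gen_char:
  assumes "is_subring Ob"
  shows "ring_gen Ob (entries u) = {mpeval F (mfun u) | F. mp_over Ob F}"
proof
  let ?E = "{mpeval F (mfun u) | F. mp_over Ob F}"
  show "ring_gen Ob (entries u) \<subseteq> ?E"
  proof (rule ring_gen_min)
    show "is_subring ?E"
      unfolding is_subring_def
    proof (intro conjI ballI)
      show "0 \<in> ?E" using EI[OF mpo_mpC[OF assms sr_0[OF assms]]]
        by (simp add: mpeval_evalh evalh_mpC[OF rhom_id])
      show "1 \<in> ?E" using EI[OF mpo_mpC[OF assms sr_1[OF assms]]]
        by (simp add: mpeval_evalh evalh_mpC[OF rhom_id])
      fix a b assume "a \<in> ?E" "b \<in> ?E"
      then obtain F G where F: "mp_over Ob F" "a = mpeval F (mfun u)"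
        and G: "mp_over Ob G" "b = mpeval G (mfun u)" by blast
      have "a + b = mpeval (F + G) (mfun u)" using F G by (simp add: mpeval_evalh evalh_add[OF rhom_id])
      then show "a + b \<in> ?E" using EI[OF mpo_add[OF assms F(1) G(1)]] by simp
      have "a * b = mpeval (F * G) (mfun u)" using F G by (simp add: mpeval_evalh evalh_mult[OF rhom_id])
      then show "a * b \<in> ?E" using EI[OF mpo_mult[OF assms F(1) G(1)]] by simp
      have "- a = mpeval (- F) (mfun u)" using F by (simp add: mpeval_evalh evalh_uminus[OF rhom_id])
      then show "- a \<in> ?E" using EI[OF mpo_uminus[OF assms F(1)]] by simp
    qed
    show "Ob \<subseteq> ?E"
    proof
      fix a assume a: "a \<in> Ob"
      have "a = mpeval (mpC a) (mfun u)" by (simp add: mpeval_evalh evalh_mpC[OF rhom_id])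
      then show "a \<in> ?E" by (rule ssubst, intro EI[OF mpo_mpC[OF assms a]])
    qed
    show "entries u \<subseteq> ?E"
    proof
      fix a assume "a \<in> entries u"
      then obtain i j where a: "a = u $ i $ j" by (auto simp: entries_def)
      have "a = mpeval (mpX (i, j)) (mfun u)" by (simp add: a mpeval_evalh evalh_mpX[OF rhom_id] mfun_def)
      then show "a \<in> ?E" by (rule ssubst, intro EI[OF mpo_mpX[OF assms]])
    qed
  qed
  show "?E \<subseteq> ring_gen Ob (entries u)"
  proof
    fix a assume "a \<in> ?E"
    then obtain F where F: "mp_over Ob F" "a = mpeval F (mfun u)" by auto
    have sub: "Ob \<subseteq> ring_gen Ob (entries u)" by (rule ring_gen_O)
    have "mp_over (ring_gen Ob (entries u)) F" using F(1) sub by (auto simp: mp_over_def)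
    moreover have "mfun u v \<in> ring_gen Ob (entries u)" for v
      using ring_gen_S[of "entries u" Ob] by (auto simp: mfun_def entries_def split: prod.splits)
    ultimately show "a \<in> ring_gen Ob (entries u)"
      unfolding F(2) by (rule mpeval_in[OF ring_gen_sr])
  qed
qed


lemma mm_add_r: "((B::'a::semiring_1^'n^'m) + C) ** A = B ** A + C ** A"
  by (simp add: matrix_matrix_mult_def vec_eq_iff sum.distrib distrib_right)

lemma mm_add_l: "(A::'a::semiring_1^'n^'m) ** (B + C) = A ** B + A ** C"
  by (rule matrix_add_ldistrib)

lemma mm_entry: "(A ** B) $ i $ j = (\<Sum>k\<in>UNIV. A $ i $ k * B $ k $ j)"
  by (simp add: matrix_matrix_mult_def)

lemma mat_map_entry [simp]: "mat_map f A $ i $ j = f (A $ i $ j)"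
  by (simp add: mat_map_def)

lemma frob_pow_entry [simp]: "frob_pow p A $ i $ j = (A $ i $ j) ^ p"
  by (simp add: frob_pow_def)

lemma mat_map_hom_mult:
  assumes "hom_on A s" "is_subring A" "\<And>i j. X $ i $ j \<in> A" "\<And>i j. Y $ i $ j \<in> A"
  shows "mat_map s (X ** Y) = mat_map s X ** mat_map s Y"
  unfolding vec_eq_iff mat_map_entry mm_entry
  using assms by (simp add: hom_sum hom_mult sr_mult)

lemma mat_map_hom_add:
  assumes "hom_on A s" "\<And>i j. X $ i $ j \<in> A" "\<And>i j. Y $ i $ j \<in> A"
  shows "mat_map s (X + Y) = mat_map s X + mat_map s Y"
  unfolding vec_eq_iff using assms by (simp add: hom_add)

lemma mm_in:
  assumes "is_subring A" "\<And>i j. X $ i $ j \<in> A" "\<And>i j. Y $ i $ j \<in> A"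
  shows "(X ** Y) $ i $ j \<in> A"
  unfolding mm_entry using assms by (intro sr_sum sr_mult) auto

lemma phi_mat_mult: "witt_frame p \<phi> \<Longrightarrow> mat_map \<phi> (X ** Y) = mat_map \<phi> X ** mat_map \<phi> Y"
  by (rule mat_map_hom_mult[OF wf_hom sr_UNIV]) auto

definition pmat :: "nat \<Rightarrow> 'a::comm_ring_1^'n^'n \<Rightarrow> 'a^'n^'n" where
  "pmat p \<alpha> = mat_map (\<lambda>x. of_nat p * x) \<alpha>"

lemma pmat_mult: "(pmat p \<alpha> ** X) $ i $ j = of_nat p * (\<alpha> ** X) $ i $ j"
  by (simp add: pmat_def mm_entry sum_distrib_left mult.assoc)

lemma cancel_lemma:
  fixes Dm :: "'a::idom^'n^'m" and \<phi> :: "'a \<Rightarrow> 'a"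
  assumes w: "witt_frame p \<phi>"
    and h: "\<And>i j. Dm $ i $ j = - (pmat p \<alpha> ** Dm) $ i $ j"
  shows "Dm = 0"
proof -
  have "\<forall>i j. (of_nat p :: 'a) ^ k dvd Dm $ i $ j" for k
  proof (induction k)
    case 0 then show ?case by simp
  next
    case (Suc k)
    show ?case
    proof (intro allI)
      fix i j
      have "(of_nat p :: 'a) ^ Suc k dvd of_nat p * (\<alpha> ** Dm) $ i $ j"
        unfolding power_Suc mm_entry
        by (intro mult_dvd_mono dvd_refl dvd_sum) (use Suc in \<open>auto intro: dvd_mult\<close>)
      then show "(of_nat p :: 'a) ^ Suc k dvd Dm $ i $ j"
        using h[of i j] by (simp add: pmat_mult)
    qed
  qed
  then show ?thesis using wf_pdiv_zero[OF w] by (simp add: vec_eq_iff)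
qed

section \<open>delta identities\<close>

definition Qp :: "nat \<Rightarrow> 'a::comm_ring_1 \<Rightarrow> 'a \<Rightarrow> 'a" where
  "Qp p a b = (\<Sum>k\<in>{1..<p}. of_nat ((p choose k) div p) * a ^ k * b ^ (p - k))"

lemma binom_p:
  assumes "prime p"
  shows "(a + b :: 'a::comm_ring_1) ^ p = a ^ p + b ^ p + of_nat p * Qp p a b"
proof -
  have p0: "p > 0" using assms prime_gt_0_nat by blast
  have split: "{..p} = insert 0 (insert p {1..<p})" using p0 by auto
  have mid: "of_nat (p choose k) * a ^ k * b ^ (p - k) = of_nat p * (of_nat ((p choose k) div p) * a ^ k * b ^ (p - k))"
    if "k \<in> {1..<p}" for k
  proof -
    have "p dvd (p choose k)" using that assms by (intro dvd_choose_prime) auto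
    then have "p choose k = p * ((p choose k) div p)" by simp
    then have "(of_nat (p choose k) :: 'a) = of_nat p * of_nat ((p choose k) div p)"
      by (metis of_nat_mult)
    then show ?thesis by (simp add: mult.assoc)
  qed
  have "(a + b) ^ p = (\<Sum>k\<le>p. of_nat (p choose k) * a ^ k * b ^ (p - k))" by (rule binomial_ring)
  also have "\<dots> = b ^ p + (a ^ p + (\<Sum>k\<in>{1..<p}. of_nat (p choose k) * a ^ k * b ^ (p - k)))"
    unfolding split using p0 by simp
  also have "(\<Sum>k\<in>{1..<p}. of_nat (p choose k) * a ^ k * b ^ (p - k)) = of_nat p * Qp p a b"
    unfolding Qp_def sum_distrib_left by (rule sum.cong) (auto simp: mid)
  finally show ?thesis by (simp add: algebra_simps)
qed

lemma delta_add:
  assumes w: "witt_frame p (\<phi>::'a::idom\<Rightarrow>'a)"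
  shows "delta p \<phi> (a + b) = delta p \<phi> a + delta p \<phi> b - Qp p a b"
proof (rule delta_unique[OF w])
  show "of_nat p * (delta p \<phi> a + delta p \<phi> b - Qp p a b) = \<phi> (a + b) - (a + b) ^ p"
    unfolding wf_phi_add[OF w] binom_p[OF wf_prime[OF w]] phi_eq[OF w, of a] phi_eq[OF w, of b]
    by (simp add: algebra_simps)
qed

lemma delta_mult:
  assumes w: "witt_frame p (\<phi>::'a::idom\<Rightarrow>'a)"
  shows "delta p \<phi> (a * b) = a ^ p * delta p \<phi> b + b ^ p * delta p \<phi> a + of_nat p * delta p \<phi> a * delta p \<phi> b"
proof (rule delta_unique[OF w])
  have "\<phi> (a * b) = (a ^ p + of_nat p * delta p \<phi> a) * (b ^ p + of_nat p * delta p \<phi> b)"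
    using wf_phi_mult[OF w, of a b] phi_eq[OF w, of a] phi_eq[OF w, of b] by simp
  then show "of_nat p * (a ^ p * delta p \<phi> b + b ^ p * delta p \<phi> a + of_nat p * delta p \<phi> a * delta p \<phi> b)
      = \<phi> (a * b) - (a * b) ^ p"
    by (simp add: algebra_simps power_mult_distrib)
qed

lemma phi_uminus: "witt_frame p \<phi> \<Longrightarrow> \<phi> (- a) = - \<phi> a"
  using hom_uminus[OF wf_hom sr_UNIV] by blast

lemma delta_uminus:
  assumes w: "witt_frame p (\<phi>::'a::idom\<Rightarrow>'a)"
  shows "delta p \<phi> (- a) = - delta p \<phi> a"
proof (rule delta_unique[OF w])
  have "(- a) ^ p = - (a ^ p)" using wf_odd[OF w] by simp
  then show "of_nat p * - delta p \<phi> a = \<phi> (- a) - (- a) ^ p"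
    using delta_eq[OF w, of a] phi_uminus[OF w, of a] by (simp add: algebra_simps)
qed

lemma delta_0: "witt_frame p (\<phi>::'a::idom\<Rightarrow>'a) \<Longrightarrow> delta p \<phi> 0 = 0"
proof (rule delta_unique)
  assume w: "witt_frame p \<phi>"
  then show "witt_frame p \<phi>" .
  have "p > 0" using wf_p_gt1[OF w] by simp
  then show "of_nat p * 0 = \<phi> 0 - 0 ^ p" using wf_phi0[OF w] by simp
qed

lemma delta_1: "witt_frame p (\<phi>::'a::idom\<Rightarrow>'a) \<Longrightarrow> delta p \<phi> 1 = 0"
  by (rule delta_unique) (simp_all add: wf_phi1)

lemma Qp_in: "is_subring A \<Longrightarrow> a \<in> A \<Longrightarrow> b \<in> A \<Longrightarrow> Qp p a b \<in> A"
  unfolding Qp_def by (intro sr_sum sr_mult sr_of_nat sr_power) auto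

lemma delta_closed_subring:
  assumes w: "witt_frame p (\<phi>::'a::idom\<Rightarrow>'a)" and A: "is_subring A"
  shows "is_subring {x \<in> A. delta p \<phi> x \<in> A}"
  unfolding is_subring_def
proof (intro conjI ballI)
  show "0 \<in> {x \<in> A. delta p \<phi> x \<in> A}" using delta_0[OF w] sr_0[OF A] by simp
  show "1 \<in> {x \<in> A. delta p \<phi> x \<in> A}" using delta_1[OF w] sr_0[OF A] sr_1[OF A] by simp
  fix a b assume a: "a \<in> {x \<in> A. delta p \<phi> x \<in> A}" and b: "b \<in> {x \<in> A. delta p \<phi> x \<in> A}"
  then have aA: "a \<in> A" "delta p \<phi> a \<in> A" and bA: "b \<in> A" "delta p \<phi> b \<in> A" by auto
  show "a + b \<in> {x \<in> A. delta p \<phi> x \<in> A}"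
    using aA bA by (simp add: delta_add[OF w] sr_add[OF A] sr_diff[OF A] Qp_in[OF A])
  show "a * b \<in> {x \<in> A. delta p \<phi> x \<in> A}"
    using aA bA by (simp add: delta_mult[OF w] sr_add[OF A] sr_mult[OF A] sr_power[OF A] sr_of_nat[OF A])
  show "- a \<in> {x \<in> A. delta p \<phi> x \<in> A}"
    using aA by (simp add: delta_uminus[OF w] sr_uminus[OF A])
qed


locale lset =
  fixes p :: nat and \<phi> :: "'a::idom \<Rightarrow> 'a" and Ob :: "'a set" and \<alpha> u :: "'a^'n^'n"
  assumes w: "witt_frame p \<phi>"
    and dsub: "delta_subring p \<phi> Ob"
    and aO: "\<forall>i j. \<alpha> $ i $ j \<in> Ob"
    and uinv: "in_GL UNIV u"
    and ueq: "mat_map (delta p \<phi>) u = \<alpha> ** frob_pow p u"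
begin

abbreviation "AA \<equiv> ring_gen Ob (entries u)"

lemma Ob_sr: "is_subring Ob" using dsub by (simp add: delta_subring_def)
lemma Ob_delta: "a \<in> Ob \<Longrightarrow> delta p \<phi> a \<in> Ob" using dsub by (simp add: delta_subring_def)
lemma phi_Ob: "a \<in> Ob \<Longrightarrow> \<phi> a \<in> Ob"
  using phi_eq[OF w, of a] Ob_delta[of a] Ob_sr
  by (metis sr_add sr_mult sr_of_nat sr_power)
lemma AA_sr: "is_subring AA" by (rule ring_gen_sr)
lemma Ob_AA: "Ob \<subseteq> AA" by (rule ring_gen_O)
lemma u_AA: "u $ i $ j \<in> AA" using ring_gen_S[of "entries u" Ob] by (auto simp: entries_def)
lemma a_AA: "\<alpha> $ i $ j \<in> AA" using aO Ob_AA by auto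

lemma delta_u: "delta p \<phi> (u $ i $ j) = (\<alpha> ** frob_pow p u) $ i $ j"
  using arg_cong[OF ueq, of "\<lambda>M. M $ i $ j"] by simp

lemma AA_delta: "x \<in> AA \<Longrightarrow> delta p \<phi> x \<in> AA"
proof -
  assume x: "x \<in> AA"
  have "AA \<subseteq> {x \<in> AA. delta p \<phi> x \<in> AA}"
  proof (rule ring_gen_min)
    show "is_subring {x \<in> AA. delta p \<phi> x \<in> AA}" by (rule delta_closed_subring[OF w AA_sr])
    show "Ob \<subseteq> {x \<in> AA. delta p \<phi> x \<in> AA}" using Ob_AA Ob_delta by auto
    show "entries u \<subseteq> {x \<in> AA. delta p \<phi> x \<in> AA}"
    proof
      fix y assume "y \<in> entries u"
      then obtain i j where y: "y = u $ i $ j" by (auto simp: entries_def)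
      have "(\<alpha> ** frob_pow p u) $ i $ j \<in> AA"
        by (rule mm_in[OF AA_sr]) (auto intro: a_AA sr_power[OF AA_sr] u_AA)
      then show "y \<in> {x \<in> AA. delta p \<phi> x \<in> AA}" using y u_AA delta_u by simp
    qed
  qed
  then show ?thesis using x by blast
qed

lemma AA_phi: "x \<in> AA \<Longrightarrow> \<phi> x \<in> AA"
  using phi_eq[OF w, of x] AA_delta[of x] AA_sr
  by (metis sr_add sr_mult sr_of_nat sr_power)

lemma delta_gen_eq: "delta_gen p \<phi> Ob u = AA"
proof
  show "delta_gen p \<phi> Ob u \<subseteq> AA"
    unfolding delta_gen_def
  proof (rule ring_gen_min[OF AA_sr Ob_AA])
    have "((delta p \<phi>) ^^ k) (u $ i $ j) \<in> AA" for k i j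
      by (induction k) (simp_all add: u_AA AA_delta)
    then show "(\<Union>k. entries (mat_map (delta p \<phi> ^^ k) u)) \<subseteq> AA"
      by (auto simp: entries_def)
  qed
  show "AA \<subseteq> delta_gen p \<phi> Ob u"
    unfolding delta_gen_def
  proof (rule ring_gen_min[OF ring_gen_sr ring_gen_O])
    have "entries u \<subseteq> (\<Union>k. entries (mat_map (delta p \<phi> ^^ k) u))"
    proof
      fix y assume "y \<in> entries u"
      then have "y \<in> entries (mat_map (delta p \<phi> ^^ 0) u)" by (auto simp: entries_def)
      then show "y \<in> (\<Union>k. entries (mat_map (delta p \<phi> ^^ k) u))" by blast
    qed
    then show "entries u \<subseteq> ring_gen Ob (\<Union>k. entries (mat_map (delta p \<phi> ^^ k) u))"
      using ring_gen_S by blast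
  qed
qed

lemma P_Ob: "pmat p \<alpha> $ i $ j \<in> Ob"
  using aO Ob_sr by (simp add: pmat_def sr_mult sr_of_nat)
lemma P_AA: "pmat p \<alpha> $ i $ j \<in> AA" using P_Ob Ob_AA by auto

lemma phi_mat: "mat_map \<phi> X = frob_pow p X + pmat p \<alpha> ** frob_pow p X"
  if "mat_map (delta p \<phi>) X = \<alpha> ** frob_pow p X" for X
proof -
  have "\<phi> (X $ i $ j) = (X $ i $ j) ^ p + of_nat p * (\<alpha> ** frob_pow p X) $ i $ j" for i j
    using phi_eq[OF w, of "X $ i $ j"] arg_cong[OF that, of "\<lambda>M. M $ i $ j"] by simp
  then show ?thesis by (simp add: vec_eq_iff pmat_mult)
qed

lemma phi_u: "mat_map \<phi> u = frob_pow p u + pmat p \<alpha> ** frob_pow p u"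
  by (rule phi_mat[OF ueq])

lemma lin_aux:
  fixes x y z t d :: "'b::comm_ring"
  assumes h1: "x + y = z + t" and h2: "d = y - t"
  shows "x - z = - d"
proof -
  have "x - z = (x + y) - (z + t) + (t - y)" by (simp add: algebra_simps)
  also have "\<dots> = t - y" using h1 by simp
  also have "\<dots> = - d" using h2 by simp
  finally show ?thesis .
qed

lemma in_GL_inv: "in_GL Ob' M \<Longrightarrow> \<exists>B. (\<forall>i j. B $ i $ j \<in> Ob') \<and> M ** B = mat 1 \<and> B ** M = mat 1"
  by (simp add: in_GL_def)

lemma u_cancel: "u ** c = u ** c' \<Longrightarrow> c = c'"
proof -
  assume h: "u ** c = u ** c'"
  obtain B where B: "B ** u = mat 1" using uinv by (auto simp: in_GL_def)
  have "(B ** u) ** c = (B ** u) ** c'" using h by (simp add: matrix_mul_assoc[symmetric])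
  then show ?thesis using B by simp
qed

lemma part3_core:
  assumes aut: "O_alg_aut Ob AA \<sigma>" and su: "mat_map \<sigma> u = u ** c"
    and cO: "in_GL Ob c" and cG: "c \<in> Gw p \<phi> u"
  shows "\<sigma> \<in> Gtilde p \<phi> Ob u"
proof -
  have bij: "bij_betw \<sigma> AA AA" and hom: "hom_on AA \<sigma>" and fx: "\<And>a. a \<in> Ob \<Longrightarrow> \<sigma> a = a"
    using aut by (auto simp: O_alg_aut_def hom_on_def)
  have s1: "\<sigma> 1 = 1" using fx sr_1[OF Ob_sr] by blast
  have sA: "x \<in> AA \<Longrightarrow> \<sigma> x \<in> AA" for x using bij by (auto simp: bij_betw_def)
  have sp: "\<sigma> (of_nat p) = of_nat p" using fx sr_of_nat[OF Ob_sr] by blast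
  let ?U = "frob_pow p u" and ?V = "frob_pow p (u ** c)" and ?P = "pmat p \<alpha>"
  have UA: "?U $ i $ j \<in> AA" for i j by (simp add: sr_power[OF AA_sr] u_AA)
  have PUA: "(?P ** ?U) $ i $ j \<in> AA" for i j by (rule mm_in[OF AA_sr P_AA UA])
  have sU: "mat_map \<sigma> ?U = ?V"
  proof -
    have "\<sigma> ((u $ i $ j) ^ p) = ((u ** c) $ i $ j) ^ p" for i j
      using hom_power[OF hom AA_sr s1 u_AA] arg_cong[OF su, of "\<lambda>M. M $ i $ j"] by simp
    then show ?thesis by (simp add: vec_eq_iff)
  qed
  have sP: "mat_map \<sigma> ?P = ?P" using fx P_Ob by (simp add: vec_eq_iff)
  have key: "mat_map \<sigma> (mat_map \<phi> u) = mat_map \<phi> (mat_map \<sigma> u)"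
  proof -
    have "mat_map \<sigma> (mat_map \<phi> u) = mat_map \<sigma> ?U + mat_map \<sigma> (?P ** ?U)"
      unfolding phi_u by (rule mat_map_hom_add[OF hom UA PUA])
    also have "\<dots> = ?V + ?P ** ?V"
      using mat_map_hom_mult[OF hom AA_sr P_AA UA] sU sP by simp
    finally have l: "mat_map \<sigma> (mat_map \<phi> u) = ?V + ?P ** ?V" .
    have "mat_map \<phi> (mat_map \<sigma> u) = mat_map \<phi> u ** mat_map \<phi> c"
      unfolding su by (rule phi_mat_mult[OF w])
    also have "\<dots> = ?U ** mat_map \<phi> c + ?P ** (?U ** mat_map \<phi> c)"
      unfolding phi_u mm_add_r matrix_mul_assoc ..
    also have "?U ** mat_map \<phi> c = ?V" using cG by (simp add: Gw_def)
    finally show ?thesis using l by simp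
  qed
  define T where "T = {x \<in> AA. \<sigma> (\<phi> x) = \<phi> (\<sigma> x)}"
  have T_sr: "is_subring T"
    unfolding is_subring_def T_def
  proof (intro conjI ballI)
    show "0 \<in> {x \<in> AA. \<sigma> (\<phi> x) = \<phi> (\<sigma> x)}"
      using sr_0[OF AA_sr] wf_phi0[OF w] hom_0[OF hom AA_sr] by simp
    show "1 \<in> {x \<in> AA. \<sigma> (\<phi> x) = \<phi> (\<sigma> x)}"
      using sr_1[OF AA_sr] wf_phi1[OF w] s1 by simp
    fix a b assume a: "a \<in> {x \<in> AA. \<sigma> (\<phi> x) = \<phi> (\<sigma> x)}" and b: "b \<in> {x \<in> AA. \<sigma> (\<phi> x) = \<phi> (\<sigma> x)}"
    then have aA: "a \<in> AA" "\<sigma> (\<phi> a) = \<phi> (\<sigma> a)" and bA: "b \<in> AA" "\<sigma> (\<phi> b) = \<phi> (\<sigma> b)" by auto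
    show "a + b \<in> {x \<in> AA. \<sigma> (\<phi> x) = \<phi> (\<sigma> x)}"
      using aA bA by (simp add: sr_add[OF AA_sr] wf_phi_add[OF w] hom_add[OF hom] AA_phi)
    show "a * b \<in> {x \<in> AA. \<sigma> (\<phi> x) = \<phi> (\<sigma> x)}"
      using aA bA by (simp add: sr_mult[OF AA_sr] wf_phi_mult[OF w] hom_mult[OF hom] AA_phi)
    show "- a \<in> {x \<in> AA. \<sigma> (\<phi> x) = \<phi> (\<sigma> x)}"
      using aA by (simp add: sr_uminus[OF AA_sr] phi_uminus[OF w] hom_uminus[OF hom AA_sr] AA_phi)
  qed
  have AT: "AA \<subseteq> T"
  proof (rule ring_gen_min[OF T_sr])
    show "Ob \<subseteq> T" using Ob_AA phi_Ob fx by (auto simp: T_def)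
    show "entries u \<subseteq> T"
    proof
      fix y assume "y \<in> entries u"
      then obtain i j where y: "y = u $ i $ j" by (auto simp: entries_def)
      show "y \<in> T" using arg_cong[OF key, of "\<lambda>M. M $ i $ j"] u_AA by (simp add: T_def y)
    qed
  qed
  have comm: "\<sigma> (delta p \<phi> x) = delta p \<phi> (\<sigma> x)" if x: "x \<in> AA" for x
  proof -
    have xT: "\<sigma> (\<phi> x) = \<phi> (\<sigma> x)" using AT x by (auto simp: T_def)
    have "\<sigma> (of_nat p * delta p \<phi> x) = \<sigma> (\<phi> x - x ^ p)" using delta_eq[OF w, of x] by simp
    then have "of_nat p * \<sigma> (delta p \<phi> x) = \<phi> (\<sigma> x) - \<sigma> x ^ p"
      using x AA_delta[OF x] AA_phi[OF x]
      by (simp add: hom_mult[OF hom] hom_diff[OF hom AA_sr] hom_power[OF hom AA_sr s1]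
          sr_of_nat[OF AA_sr] sr_power[OF AA_sr] sp xT)
    then show ?thesis by (intro delta_unique[OF w, symmetric])
  qed
  show ?thesis
    unfolding Gtilde_def delta_gen_eq using aut comm su cO by blast
qed

lemma Grel_props:
  assumes "c \<in> Grel p \<phi> Ob u"
  shows "in_GL Ob c" and "c \<in> Gw p \<phi> u"
    and "\<exists>\<sigma>. O_alg_aut Ob AA \<sigma> \<and> (\<forall>a\<in>AA. \<sigma> (delta p \<phi> a) = delta p \<phi> (\<sigma> a)) \<and> mat_map \<sigma> u = u ** c"
proof -
  obtain \<sigma> where sG: "\<sigma> \<in> Gtilde p \<phi> Ob u" and su: "mat_map \<sigma> u = u ** c"
    using assms by (auto simp: Grel_def)
  then have aut: "O_alg_aut Ob AA \<sigma>" and comm: "\<forall>a\<in>AA. \<sigma> (delta p \<phi> a) = delta p \<phi> (\<sigma> a)"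
    and ex: "\<exists>c0. in_GL Ob c0 \<and> mat_map \<sigma> u = u ** c0"
    by (auto simp: Gtilde_def delta_gen_eq)
  from ex obtain c0 where c0: "in_GL Ob c0" "mat_map \<sigma> u = u ** c0" by blast
  have "u ** c = u ** c0" using su c0(2) by simp
  then have "c = c0" by (rule u_cancel)
  then show cO: "in_GL Ob c" using c0 by simp
  show "\<exists>\<sigma>. O_alg_aut Ob AA \<sigma> \<and> (\<forall>a\<in>AA. \<sigma> (delta p \<phi> a) = delta p \<phi> (\<sigma> a)) \<and> mat_map \<sigma> u = u ** c"
    using aut comm su by blast
  have hom: "hom_on AA \<sigma>" and fx: "\<And>a. a \<in> Ob \<Longrightarrow> \<sigma> a = a"
    using aut by (auto simp: O_alg_aut_def hom_on_def)
  have s1: "\<sigma> 1 = 1" using fx sr_1[OF Ob_sr] by blast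
  let ?U = "frob_pow p u" and ?V = "frob_pow p (u ** c)" and ?P = "pmat p \<alpha>"
    and ?W = "frob_pow p u ** mat_map \<phi> c"
  have UA: "?U $ i $ j \<in> AA" for i j by (simp add: sr_power[OF AA_sr] u_AA)
  have sU: "mat_map \<sigma> ?U = ?V"
  proof -
    have "\<sigma> ((u $ i $ j) ^ p) = ((u ** c) $ i $ j) ^ p" for i j
      using hom_power[OF hom AA_sr s1 u_AA] arg_cong[OF su, of "\<lambda>M. M $ i $ j"] by simp
    then show ?thesis by (simp add: vec_eq_iff)
  qed
  have sa: "mat_map \<sigma> \<alpha> = \<alpha>" using fx aO by (simp add: vec_eq_iff)
  have duc: "mat_map (delta p \<phi>) (u ** c) = \<alpha> ** ?V"
  proof -
    have "mat_map (delta p \<phi>) (u ** c) = mat_map (delta p \<phi>) (mat_map \<sigma> u)" using su by simp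
    also have "\<dots> = mat_map \<sigma> (mat_map (delta p \<phi>) u)" using comm u_AA by (simp add: vec_eq_iff)
    also have "\<dots> = mat_map \<sigma> \<alpha> ** mat_map \<sigma> ?U" unfolding ueq
      by (rule mat_map_hom_mult[OF hom AA_sr a_AA UA])
    finally show ?thesis using sa sU by simp
  qed
  have e1: "mat_map \<phi> (u ** c) = ?V + ?P ** ?V" by (rule phi_mat[OF duc])
  have e2: "mat_map \<phi> (u ** c) = ?W + ?P ** ?W"
    unfolding phi_mat_mult[OF w] phi_u mm_add_r matrix_mul_assoc ..
  have "?V - ?W = 0"
  proof (rule cancel_lemma[OF w])
    fix i j
    have h1: "?V $ i $ j + (?P ** ?V) $ i $ j = ?W $ i $ j + (?P ** ?W) $ i $ j"
      using arg_cong[OF e1[symmetric], of "\<lambda>M. M $ i $ j"] arg_cong[OF e2, of "\<lambda>M. M $ i $ j"]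
      by simp
    have h2: "(?P ** (?V - ?W)) $ i $ j = (?P ** ?V) $ i $ j - (?P ** ?W) $ i $ j"
      by (simp add: mm_entry right_diff_distrib sum_subtractf)
    have g: "(?V - ?W) $ i $ j = ?V $ i $ j - ?W $ i $ j" by simp
    show "(?V - ?W) $ i $ j = - (?P ** (?V - ?W)) $ i $ j"
      unfolding g by (rule lin_aux[OF h1 h2])
  qed
  then have "?V = ?W" by simp
  moreover have "in_GL UNIV c" using cO by (auto simp: in_GL_def)
  ultimately show "c \<in> Gw p \<phi> u" by (simp add: Gw_def)
qed

end


lemma sum_single_nz:
  fixes f :: "'n::finite \<Rightarrow> 'a::comm_monoid_add"
  assumes "\<And>k. k \<noteq> r \<Longrightarrow> f k = 0"
  shows "(\<Sum>k\<in>UNIV. f k) = f r"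
proof -
  have "(\<Sum>k\<in>UNIV. f k) = (\<Sum>k\<in>UNIV. if k = r then f k else 0)"
    by (rule sum.cong) (auto simp: assms)
  also have "\<dots> = f r" by simp
  finally show ?thesis .
qed

lemma coeff_lin_pow: "coeff ([:x, y:] ^ n) 1 = of_nat n * x ^ (n - 1) * (y::'a::comm_ring_1)"
proof (induction n)
  case 0 then show ?case by simp
next
  case (Suc n)
  have "coeff ([:x, y:] ^ Suc n) 1 = x * coeff ([:x, y:] ^ n) 1 + y * coeff ([:x, y:] ^ n) 0"
    by (simp add: coeff_mult)
  also have "\<dots> = x * (of_nat n * x ^ (n - 1) * y) + y * x ^ n"
    unfolding Suc.IH coeff_0_power by simp
  also have "\<dots> = of_nat (Suc n) * x ^ n * y"
  proof (cases n)
    case 0 then show ?thesis by simp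
  next
    case (Suc m) then show ?thesis by (simp add: algebra_simps)
  qed
  finally show ?case by simp
qed

lemma col_unique:
  fixes x y :: "'a::idom"
  assumes w: "witt_frame p (\<phi>::'a\<Rightarrow>'a)"
    and h: "\<And>l. (x + l * y) ^ p = x ^ p + l ^ p * y ^ p"
  shows "x = 0 \<or> y = 0"
proof -
  define f where "f = [:x, y:] ^ p - [:x ^ p:] - monom (y ^ p) p"
  have ev: "poly f l = 0" for l
    unfolding f_def using h[of l] by (simp add: poly_monom algebra_simps)
  have "f = 0"
  proof (rule ccontr)
    assume "f \<noteq> 0"
    then have "finite {l. poly f l = 0}" by (rule poly_roots_finite)
    then show False using ev wf_infinite[OF w] by simp
  qed
  then have c0: "coeff f 1 = 0" by simp
  have p1: "p \<noteq> 1" "p - 1 > 0" using wf_p_gt1[OF w] by simp_all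
  have "coeff f 1 = of_nat p * x ^ (p - 1) * y"
    unfolding f_def coeff_diff coeff_lin_pow using p1 by (simp add: coeff_monom)
  then have "of_nat p * x ^ (p - 1) * y = 0" using c0 by simp
  then show ?thesis using wf_p_nz[OF w] p1 by simp
qed

definition Emat :: "'n \<Rightarrow> 'n \<Rightarrow> 'a::comm_ring_1 \<Rightarrow> 'a^'n^'n" where
  "Emat a b l = (\<chi> i j. if i = a \<and> j = b then l else 0)"

lemma Emat_entry [simp]: "Emat a b l $ i $ j = (if i = a \<and> j = b then l else 0)"
  by (simp add: Emat_def)

lemma Emat_sq: "a \<noteq> b \<Longrightarrow> Emat a b l ** Emat a b m = (0::'a::comm_ring_1^'n::finite^'n)"
  by (simp add: vec_eq_iff mm_entry) (auto intro!: sum.neutral)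

lemma Emat_add: "Emat a b l + Emat a b m = Emat a b (l + m)"
  by (simp add: vec_eq_iff)

lemma Emat_0: "Emat a b 0 = 0" by (simp add: vec_eq_iff)

lemma Emat_inv:
  assumes "a \<noteq> b"
  shows "(mat 1 + Emat a b l) ** (mat 1 + Emat a b (- l)) = (mat 1 :: 'a::comm_ring_1^'n::finite^'n)"
proof -
  have "(mat 1 + Emat a b l) ** (mat 1 + Emat a b (- l)) =
    mat 1 + (Emat a b l + Emat a b (- l)) + Emat a b l ** Emat a b (- l)"
    by (simp add: mm_add_l mm_add_r algebra_simps)
  then show ?thesis by (simp add: Emat_sq[OF assms] Emat_add Emat_0)
qed

lemma Emat_GL:
  assumes "a \<noteq> b"
  shows "in_GL UNIV (mat 1 + Emat a b l :: 'a::comm_ring_1^'n::finite^'n)"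
  unfolding in_GL_def
  using Emat_inv[OF assms, of l] Emat_inv[OF assms, of "- l"] by auto

lemma monomial_lemma:
  fixes v :: "'a::idom^'n::finite^'n"
  assumes w: "witt_frame p \<phi>"
    and vinv: "in_GL UNIV v"
    and hphi: "\<And>i j. \<phi> (v $ i $ j) = (v $ i $ j) ^ p"
    and hcol: "\<And>a b j l. a \<noteq> b \<Longrightarrow> (v $ a $ j + l * v $ b $ j) ^ p = (v $ a $ j) ^ p + l ^ p * (v $ b $ j) ^ p"
  shows "v \<in> Ndelta p \<phi>"
proof -
  have cu: "v $ a $ j = 0 \<or> v $ b $ j = 0" if "a \<noteq> b" for a b j
    using col_unique[OF w hcol[OF that]] .
  obtain B where B: "v ** B = mat 1" "B ** v = mat 1" using vinv by (auto simp: in_GL_def)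
  have colnz: "\<exists>i. v $ i $ j \<noteq> 0" for j
  proof (rule ccontr)
    assume "\<not> (\<exists>i. v $ i $ j \<noteq> 0)"
    then have "(B ** v) $ j $ j = 0" by (simp add: mm_entry)
    then show False using B(2) by (simp add: mat_def)
  qed
  have rownz: "\<exists>j. v $ i $ j \<noteq> 0" for i
  proof (rule ccontr)
    assume "\<not> (\<exists>j. v $ i $ j \<noteq> 0)"
    then have "(v ** B) $ i $ i = 0" by (simp add: mm_entry)
    then show False using B(1) by (simp add: mat_def)
  qed
  define r where "r j = (SOME i. v $ i $ j \<noteq> 0)" for j
  have rnz: "v $ r j $ j \<noteq> 0" for j unfolding r_def using colnz[of j] by (rule someI_ex)
  have off: "v $ i $ j = 0" if "i \<noteq> r j" for i j
    using cu[OF that] rnz[of j] by blast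
  have "surj r"
  proof -
    have "i \<in> range r" for i
    proof -
      obtain j where "v $ i $ j \<noteq> 0" using rownz by blast
      then have "r j = i" using off[of i j] by fastforce
      then show ?thesis by blast
    qed
    then show ?thesis by blast
  qed
  then have "inj r" by (simp add: finite_UNIV_surj_inj)
  with \<open>surj r\<close> have bijr: "bij r" by (simp add: bij_def)
  define \<pi> where "\<pi> = inv r"
  have pi_iff: "\<pi> i = j \<longleftrightarrow> r j = i" for i j
    using bijr unfolding \<pi>_def by (metis bij_inv_eq_iff)
  have perm: "\<pi> permutes (UNIV :: 'n set)"
    unfolding \<pi>_def by (rule bij_imp_permutes) (simp_all add: bij_imp_bij_inv bijr)
  define W where "W = (\<chi> i j. if \<pi> i = j then (1::'a) else 0)"
  define T where "T = (\<chi> i j. if i = j then v $ r j $ j else 0)"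
  define T' where "T' = (\<chi> i j. if i = j then B $ j $ (r j) else 0)"
  have vWT: "v = W ** T"
  proof -
    have "(W ** T) $ i $ j = v $ i $ j" for i j
    proof -
      have "(W ** T) $ i $ j = T $ (\<pi> i) $ j"
        unfolding mm_entry W_def by (subst sum_single_nz[where r = "\<pi> i"]) auto
      also have "\<dots> = v $ i $ j"
        using off[of i j] pi_iff[of i j] by (auto simp: T_def)
      finally show ?thesis .
    qed
    then show ?thesis by (simp add: vec_eq_iff)
  qed
  have tb: "B $ j $ (r j) * v $ r j $ j = 1" for j
  proof -
    have "(B ** v) $ j $ j = B $ j $ (r j) * v $ r j $ j"
      unfolding mm_entry by (rule sum_single_nz) (simp add: off)
    then show ?thesis using B(2) by (simp add: mat_def)
  qed
  have TT': "T ** T' = mat 1" "T' ** T = mat 1"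
  proof -
    have "(T ** T') $ i $ j = (if i = j then 1 else 0)" for i j
    proof -
      have "(T ** T') $ i $ j = T $ i $ i * T' $ i $ j"
        unfolding mm_entry by (rule sum_single_nz) (simp add: T_def)
      then show ?thesis using tb[of i] by (cases "i = j") (simp_all add: T_def T'_def mult.commute)
    qed
    then show "T ** T' = mat 1" by (simp add: vec_eq_iff mat_def)
    have "(T' ** T) $ i $ j = (if i = j then 1 else 0)" for i j
    proof -
      have "(T' ** T) $ i $ j = T' $ i $ i * T $ i $ j"
        unfolding mm_entry by (rule sum_single_nz) (simp add: T'_def)
      then show ?thesis using tb[of i] by (cases "i = j") (simp_all add: T_def T'_def)
    qed
    then show "T' ** T = mat 1" by (simp add: vec_eq_iff mat_def)
  qed
  have "is_perm_mat W" unfolding is_perm_mat_def W_def using perm by blast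
  moreover have "is_diag T" by (simp add: is_diag_def T_def)
  moreover have "in_GL UNIV T" unfolding in_GL_def using TT' by blast
  ultimately have "v \<in> Nmon" unfolding Nmon_def using vWT by blast
  moreover have "v \<in> Gdelta p \<phi>"
    using vinv hphi delta_zero_iff[OF w] by (simp add: Gdelta_def)
  ultimately show ?thesis by (simp add: Ndelta_def)
qed


lemma Ndelta_Gw:
  fixes v w :: "'a::idom^'n::finite^'n"
  assumes w: "witt_frame p \<phi>" and v: "v \<in> Ndelta p \<phi>"
  shows "v \<in> Gw p \<phi> w"
proof -
  from v obtain W T \<pi> where vWT: "v = W ** T" and perm: "\<pi> permutes (UNIV :: 'n set)"
    and W: "W = (\<chi> i j. if \<pi> i = j then 1 else 0)" and dT: "is_diag T"
    by (auto simp: Ndelta_def Nmon_def is_perm_mat_def)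
  from v have vinv: "in_GL UNIV v" and dv: "\<And>i j. delta p \<phi> (v $ i $ j) = 0"
    by (auto simp: Ndelta_def Gdelta_def)
  have phv: "\<phi> (v $ i $ j) = (v $ i $ j) ^ p" for i j using dv delta_zero_iff[OF w] by blast
  have p0: "p > 0" using wf_p_gt1[OF w] by simp
  define r where "r = inv \<pi>"
  have off: "v $ k $ j = 0" if "k \<noteq> r j" for k j
  proof -
    have "v $ k $ j = T $ (\<pi> k) $ j"
      unfolding vWT mm_entry W by (subst sum_single_nz[where r = "\<pi> k"]) auto
    moreover have "\<pi> k \<noteq> j"
    proof
      assume "\<pi> k = j"
      then have "r j = k" unfolding r_def using permutes_inverses(2)[OF perm] by blast
      with that show False by simp
    qed
    ultimately show ?thesis using dT by (simp add: is_diag_def)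
  qed
  have "frob_pow p (w ** v) $ i $ j = (frob_pow p w ** mat_map \<phi> v) $ i $ j" for i j
  proof -
    have "(w ** v) $ i $ j = w $ i $ (r j) * v $ (r j) $ j"
      unfolding mm_entry by (rule sum_single_nz) (simp add: off)
    moreover have "(frob_pow p w ** mat_map \<phi> v) $ i $ j = (w $ i $ (r j)) ^ p * \<phi> (v $ (r j) $ j)"
      unfolding mm_entry by (subst sum_single_nz[where r = "r j"]) (simp_all add: off phv p0 wf_phi0[OF w])
    ultimately show ?thesis by (simp add: phv power_mult_distrib)
  qed
  then show ?thesis using vinv by (simp add: Gw_def vec_eq_iff)
qed

lemma frob_mat1: "p > 0 \<Longrightarrow> frob_pow p (mat 1 :: 'a::comm_ring_1^'n^'n) = mat 1"
  by (simp add: vec_eq_iff mat_def power_0_left)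

lemma frob_E:
  assumes "p > 0" "a \<noteq> b"
  shows "frob_pow p (mat 1 + Emat a b l) = (mat 1 + Emat a b (l ^ p) :: 'a::comm_ring_1^'n^'n)"
  using assms by (auto simp: vec_eq_iff mat_def power_0_left)

lemma E_mult_row:
  fixes v :: "'a::comm_ring_1^'n::finite^'n"
  shows "((mat 1 + Emat a b l) ** v) $ a $ j = v $ a $ j + l * v $ b $ j"
proof -
  have "(Emat a b l ** v) $ a $ j = l * v $ b $ j"
    unfolding mm_entry by (subst sum_single_nz[where r = b]) auto
  then show ?thesis by (simp add: mm_add_r)
qed

lemma part5_sub:
  fixes v :: "'a::idom^'n::finite^'n"
  assumes w: "witt_frame p \<phi>" and v: "v \<in> (\<Inter>w\<in>{w. in_GL UNIV w}. Gw p \<phi> w)"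
  shows "v \<in> Ndelta p \<phi>"
proof -
  have p0: "p > 0" using wf_p_gt1[OF w] by simp
  have I: "in_GL UNIV (mat 1 :: 'a^'n^'n)" by (auto simp: in_GL_def)
  have G1: "v \<in> Gw p \<phi> (mat 1)" using v I by blast
  then have vinv: "in_GL UNIV v" and fv: "frob_pow p v = mat_map \<phi> v"
    by (auto simp: Gw_def frob_mat1[OF p0])
  have hphi: "\<phi> (v $ i $ j) = (v $ i $ j) ^ p" for i j
    using arg_cong[OF fv, of "\<lambda>M. M $ i $ j"] by simp
  show ?thesis
  proof (rule monomial_lemma[OF w vinv hphi])
    fix a b :: 'n and j l assume ab: "a \<noteq> b"
    have "v \<in> Gw p \<phi> (mat 1 + Emat a b l)" using v Emat_GL[OF ab] by blast
    then have e: "frob_pow p ((mat 1 + Emat a b l) ** v) = (mat 1 + Emat a b (l ^ p)) ** frob_pow p v"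
      by (simp add: Gw_def frob_E[OF p0 ab] fv)
    show "(v $ a $ j + l * v $ b $ j) ^ p = v $ a $ j ^ p + l ^ p * v $ b $ j ^ p"
      using arg_cong[OF e, of "\<lambda>M. M $ a $ j"] by (simp add: E_mult_row)
  qed
qed

lemma card1_eq: "CARD('n) = 1 \<Longrightarrow> (i::'n::finite) = j"
proof -
  assume "CARD('n) = 1"
  then obtain x where x: "(UNIV :: 'n set) = {x}" using card_1_singleton_iff[of "UNIV :: 'n set"] by auto
  have "i \<in> {x}" "j \<in> {x}" unfolding x[symmetric] by simp_all
  then show ?thesis by simp
qed

lemma part4_Gw:
  fixes c u :: "'a::idom^'n::finite^'n"
  assumes w: "witt_frame p \<phi>" and n1: "CARD('n) = 1" and uinv: "in_GL UNIV u"
    and cG: "c \<in> Gw p \<phi> u"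
  shows "c \<in> Ndelta p \<phi>"
proof -
  have cinv: "in_GL UNIV c" and e: "frob_pow p (u ** c) = frob_pow p u ** mat_map \<phi> c"
    using cG by (auto simp: Gw_def)
  obtain B where B: "u ** B = mat 1" using uinv by (auto simp: in_GL_def)
  have sing: "(\<Sum>k\<in>UNIV. f k) = f i" for f :: "'n \<Rightarrow> 'a" and i
    by (rule sum_single_nz) (use card1_eq[OF n1] in blast)
  have unz: "u $ i $ i \<noteq> 0" for i
  proof
    assume "u $ i $ i = 0"
    then have "(u ** B) $ i $ i = 0" unfolding mm_entry sing[of _ i] by simp
    then show False using B by (simp add: mat_def)
  qed
  show ?thesis
  proof (rule monomial_lemma[OF w cinv])
    fix i j :: 'n
    have ij: "j = i" by (rule card1_eq[OF n1])
    have uc: "(u ** c) $ i $ i = u $ i $ i * c $ i $ i" unfolding mm_entry by (rule sing)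
    have rhs: "(frob_pow p u ** mat_map \<phi> c) $ i $ i = u $ i $ i ^ p * \<phi> (c $ i $ i)"
      unfolding mm_entry by (subst sing[of _ i]) simp
    have "(u $ i $ i * c $ i $ i) ^ p = u $ i $ i ^ p * \<phi> (c $ i $ i)"
      using arg_cong[OF e, of "\<lambda>M. M $ i $ i"] uc rhs by simp
    then have "u $ i $ i ^ p * c $ i $ i ^ p = u $ i $ i ^ p * \<phi> (c $ i $ i)"
      by (simp add: power_mult_distrib)
    then show "\<phi> (c $ i $ j) = c $ i $ j ^ p" using unz[of i] ij by simp
  next
    fix a b :: 'n and j l assume "a \<noteq> b"
    then show "(c $ a $ j + l * c $ b $ j) ^ p = c $ a $ j ^ p + l ^ p * c $ b $ j ^ p"
      using card1_eq[OF n1, of a b] by simp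
  qed
qed

lemma part4_eq:
  fixes v :: "'a::idom^'n::finite^'n"
  assumes w: "witt_frame p \<phi>" and n1: "CARD('n) = 1"
  shows "Ndelta p \<phi> = (Gdelta p \<phi> :: ('a^'n^'n) set)"
proof
  show "Ndelta p \<phi> \<subseteq> (Gdelta p \<phi> :: ('a^'n^'n) set)" by (auto simp: Ndelta_def)
  show "(Gdelta p \<phi> :: ('a^'n^'n) set) \<subseteq> Ndelta p \<phi>"
  proof
    fix v :: "'a^'n^'n" assume v: "v \<in> Gdelta p \<phi>"
    then have vinv: "in_GL UNIV v" and d: "\<And>i j. delta p \<phi> (v $ i $ j) = 0"
      by (auto simp: Gdelta_def)
    show "v \<in> Ndelta p \<phi>"
    proof (rule monomial_lemma[OF w vinv])
      show "\<phi> (v $ i $ j) = v $ i $ j ^ p" for i j using d delta_zero_iff[OF w] by blast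
      fix a b :: 'n and j l assume "a \<noteq> b"
      then show "(v $ a $ j + l * v $ b $ j) ^ p = v $ a $ j ^ p + l ^ p * v $ b $ j ^ p"
        using card1_eq[OF n1, of a b] by simp
    qed
  qed
qed


lemma mfun_eq: "mfun u = (\<lambda>(i, j). u $ i $ j)" by (simp add: mfun_def)

context lset
begin

lemma c_props:
  assumes "in_GL Ob c"
  shows "\<And>i j. c $ i $ j \<in> Ob" and "\<And>i j. \<phi> (c $ i $ j) \<in> Ob"
  using assms phi_Ob by (auto simp: in_GL_def)

lemma indep_Ndelta:
  fixes x :: "'v \<Rightarrow> 'a" and vr :: "'n \<Rightarrow> 'v"
  assumes ai: "alg_indep Ob x" and inj: "inj vr" and xv: "\<And>k. x (vr k) = u $ i $ k"
    and cG: "c \<in> Grel p \<phi> Ob u"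
  shows "c \<in> Ndelta p \<phi>"
proof -
  have cO: "in_GL Ob c" and cW: "c \<in> Gw p \<phi> u" using Grel_props[OF cG] by auto
  have cinv: "in_GL UNIV c" using cO by (auto simp: in_GL_def)
  have e: "frob_pow p (u ** c) = frob_pow p u ** mat_map \<phi> c" using cW by (simp add: Gw_def)
  have iden: "(\<Sum>k\<in>UNIV. t k * c $ k $ j) ^ p = (\<Sum>k\<in>UNIV. t k ^ p * \<phi> (c $ k $ j))" for t j
  proof -
    define P :: "('v, 'a) mpoly" where
      "P = (\<Sum>k\<in>UNIV. mpX (vr k) * mpC (c $ k $ j)) ^ p - (\<Sum>k\<in>UNIV. mpX (vr k) ^ p * mpC (\<phi> (c $ k $ j)))"
    have ev: "mpeval P y = (\<Sum>k\<in>UNIV. y (vr k) * c $ k $ j) ^ p - (\<Sum>k\<in>UNIV. y (vr k) ^ p * \<phi> (c $ k $ j))" for y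
      unfolding P_def mpeval_evalh
      by (simp add: evalh_diff[OF rhom_id] evalh_power[OF rhom_id] evalh_sum[OF rhom_id]
          evalh_mult[OF rhom_id] evalh_mpX[OF rhom_id] evalh_mpC[OF rhom_id])
    have PO: "mp_over Ob P"
      unfolding P_def
      by (intro mpo_diff mpo_power mpo_sum mpo_mult mpo_mpX mpo_mpC Ob_sr c_props[OF cO])
    have "mpeval P x = 0"
    proof -
      have "(\<Sum>k\<in>UNIV. x (vr k) * c $ k $ j) ^ p = (\<Sum>k\<in>UNIV. x (vr k) ^ p * \<phi> (c $ k $ j))"
        using arg_cong[OF e, of "\<lambda>M. M $ i $ j"] by (simp add: xv mm_entry)
      then show ?thesis by (simp add: ev)
    qed
    then have "P = 0" using ai PO by (auto simp: alg_indep_def)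
    then have "mpeval P (\<lambda>v. t (inv vr v)) = 0" by (simp add: mpeval_def)
    then show ?thesis by (simp add: ev inv_f_f[OF inj])
  qed
  show ?thesis
  proof (rule monomial_lemma[OF w cinv])
    fix a j
    have "(\<Sum>k\<in>UNIV. (if k = a then 1 else 0) * c $ k $ j) ^ p
        = (\<Sum>k\<in>UNIV. (if k = a then 1 else 0) ^ p * \<phi> (c $ k $ j))" by (rule iden)
    moreover have "(\<Sum>k\<in>UNIV. (if k = a then 1 else 0) * c $ k $ j) = c $ a $ j"
      by (subst sum_single_nz[where r = a]) auto
    moreover have "(\<Sum>k\<in>UNIV. (if k = a then 1 else 0) ^ p * \<phi> (c $ k $ j)) = \<phi> (c $ a $ j)"
      using wf_p_gt1[OF w] by (subst sum_single_nz[where r = a]) (auto simp: power_0_left)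
    ultimately show "\<phi> (c $ a $ j) = c $ a $ j ^ p" by simp
  next
    fix a b j :: 'n and l :: 'a assume ab: "a \<noteq> b"
    define t where "t k = (if k = a then 1 else if k = b then l else 0)" for k
    have p0: "p > 0" using wf_p_gt1[OF w] by simp
    have phc: "\<phi> (c $ k $ j) = c $ k $ j ^ p" for k
    proof -
      have "(\<Sum>kk\<in>UNIV. (if kk = k then 1 else 0) * c $ kk $ j) ^ p
          = (\<Sum>kk\<in>UNIV. (if kk = k then 1 else 0) ^ p * \<phi> (c $ kk $ j))" by (rule iden)
      moreover have "(\<Sum>kk\<in>UNIV. (if kk = k then 1 else 0) * c $ kk $ j) = c $ k $ j"
        by (subst sum_single_nz[where r = k]) auto
      moreover have "(\<Sum>kk\<in>UNIV. (if kk = k then 1 else 0) ^ p * \<phi> (c $ kk $ j)) = \<phi> (c $ k $ j)"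
        using p0 by (subst sum_single_nz[where r = k]) (auto simp: power_0_left)
      ultimately show ?thesis by simp
    qed
    have s1: "(\<Sum>k\<in>UNIV. t k * c $ k $ j) = c $ a $ j + l * c $ b $ j"
    proof -
      have "(\<Sum>k\<in>UNIV. t k * c $ k $ j) = (\<Sum>k\<in>UNIV. (if k = a then c $ a $ j else 0) + (if k = b then l * c $ b $ j else 0))"
        by (rule sum.cong) (auto simp: t_def ab)
      then show ?thesis by (simp add: sum.distrib)
    qed
    have s2: "(\<Sum>k\<in>UNIV. t k ^ p * \<phi> (c $ k $ j)) = c $ a $ j ^ p + l ^ p * c $ b $ j ^ p"
    proof -
      have "(\<Sum>k\<in>UNIV. t k ^ p * \<phi> (c $ k $ j)) = (\<Sum>k\<in>UNIV. (if k = a then c $ a $ j ^ p else 0) + (if k = b then l ^ p * c $ b $ j ^ p else 0))"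
        using p0 by (intro sum.cong) (auto simp: t_def ab phc power_0_left)
      then show ?thesis by (simp add: sum.distrib)
    qed
    show "(c $ a $ j + l * c $ b $ j) ^ p = c $ a $ j ^ p + l ^ p * c $ b $ j ^ p"
      using iden[of t j] s1 s2 by simp
  qed
qed

lemma mpeval_AA: "mp_over Ob F \<Longrightarrow> mpeval F (mfun u) \<in> AA"
  using ring_gen_char[OF Ob_sr, of u] by blast

lemma AA_char: "x \<in> AA \<Longrightarrow> \<exists>F. mp_over Ob F \<and> x = mpeval F (mfun u)"
  using ring_gen_char[OF Ob_sr, of u] by blast

lemma mfun_entries: "mfun M v \<in> A" if "\<And>i j. M $ i $ j \<in> A" for M :: "'a^'n^'n" and A
  using that by (auto simp: mfun_def split: prod.splits)

lemma Grel_Sigma0: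
  assumes cG: "c \<in> Grel p \<phi> Ob u"
  shows "c \<in> Sigma0 Ob u"
proof -
  have cO: "in_GL Ob c" using Grel_props[OF cG] by auto
  obtain \<sigma> where aut: "O_alg_aut Ob AA \<sigma>" and su: "mat_map \<sigma> u = u ** c"
    using Grel_props(3)[OF cG] by blast
  obtain B where B: "\<And>i j. B $ i $ j \<in> Ob" "c ** B = mat 1" "B ** c = mat 1"
    using cO by (auto simp: in_GL_def)
  have bij: "bij_betw \<sigma> AA AA" and hom: "hom_on AA \<sigma>" and fx: "\<And>a. a \<in> Ob \<Longrightarrow> \<sigma> a = a"
    using aut by (auto simp: O_alg_aut_def hom_on_def)
  have s1: "\<sigma> 1 = 1" using fx sr_1[OF Ob_sr] by blast
  have injs: "inj_on \<sigma> AA" using bij by (simp add: bij_betw_def)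
  have seval: "\<sigma> (mpeval F (mfun u)) = mpeval F (mfun (u ** c))" if F: "mp_over Ob F" for F
  proof -
    have "\<sigma> (mpeval F (mfun u)) = mpeval F (\<lambda>v. \<sigma> (mfun u v))"
      apply (rule hom_mpeval[OF hom AA_sr s1 F Ob_AA])
      using fx mfun_entries[OF u_AA] by blast+
    also have "(\<lambda>v. \<sigma> (mfun u v)) = mfun (u ** c)"
      using su by (auto simp: mfun_def vec_eq_iff fun_eq_iff split: prod.splits dest: arg_cong[of _ _ "\<lambda>M. M $ _ $ _"])
    finally show ?thesis .
  qed
  have s0: "\<sigma> 0 = 0" by (rule hom_0[OF hom AA_sr])
  have I0u: "I0 Ob u = {F. mp_over Ob F \<and> mpeval F (mfun u) = 0}" by (simp add: I0_def mfun_eq)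
  have "sigma0 c ` I0 Ob u = I0 Ob u"
  proof
    show "sigma0 c ` I0 Ob u \<subseteq> I0 Ob u"
    proof
      fix G assume "G \<in> sigma0 c ` I0 Ob u"
      then obtain F where F: "mp_over Ob F" "mpeval F (mfun u) = 0" and G: "G = sigma0 c F"
        unfolding I0u by blast
      have "mpeval G (mfun u) = 0"
        unfolding G mpeval_sigma0 using seval[OF F(1)] F(2) s0 by simp
      moreover have "mp_over Ob G" unfolding G by (rule mpo_sigma0[OF Ob_sr F(1) c_props(1)[OF cO]])
      ultimately show "G \<in> I0 Ob u" unfolding I0u by blast
    qed
    show "I0 Ob u \<subseteq> sigma0 c ` I0 Ob u"
    proof
      fix F assume "F \<in> I0 Ob u"
      then have F: "mp_over Ob F" "mpeval F (mfun u) = 0" unfolding I0u by auto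
      define G where "G = sigma0 B F"
      have GO: "mp_over Ob G" unfolding G_def by (rule mpo_sigma0[OF Ob_sr F(1) B(1)])
      have "\<sigma> (mpeval G (mfun u)) = mpeval G (mfun (u ** c))" by (rule seval[OF GO])
      also have "\<dots> = mpeval F (mfun u)"
        unfolding G_def mpeval_sigma0 by (simp add: matrix_mul_assoc[symmetric] B(2))
      also have "\<dots> = \<sigma> 0" using F(2) s0 by simp
      finally have "mpeval G (mfun u) = 0"
        using injs mpeval_AA[OF GO] sr_0[OF AA_sr] by (auto dest: inj_onD)
      then have "G \<in> I0 Ob u" using GO unfolding I0u by blast
      moreover have "F = sigma0 c G" unfolding G_def by (rule sigma0_inv[OF B(2), symmetric])
      ultimately show "F \<in> sigma0 c ` I0 Ob u" by blast
    qed
  qed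
  then show ?thesis using cO by (simp add: Sigma0_def)
qed

lemma Sigma0_Grel:
  assumes cN: "c \<in> Ndelta p \<phi>" and cS: "c \<in> Sigma0 Ob u"
  shows "c \<in> Grel p \<phi> Ob u"
proof -
  have cO: "in_GL Ob c" and pres: "sigma0 c ` I0 Ob u = I0 Ob u" using cS by (auto simp: Sigma0_def)
  obtain B where B: "\<And>i j. B $ i $ j \<in> Ob" "c ** B = mat 1" "B ** c = mat 1"
    using cO by (auto simp: in_GL_def)
  have cOe: "\<And>i j. c $ i $ j \<in> Ob" by (rule c_props(1)[OF cO])
  have I0u: "I0 Ob u = {F. mp_over Ob F \<and> mpeval F (mfun u) = 0}" by (simp add: I0_def mfun_eq)
  have ev_diff: "mpeval (F - G) y = mpeval F y - mpeval G y" for F G :: "('n \<times> 'n, 'a) mpoly" and y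
    by (simp add: mpeval_evalh evalh_diff[OF rhom_id])
  have wd: "mpeval F (mfun (u ** c)) = mpeval G (mfun (u ** c))"
    if F: "mp_over Ob F" and G: "mp_over Ob G" and eq: "mpeval F (mfun u) = mpeval G (mfun u)" for F G
  proof -
    have HO: "mp_over Ob (F - G)" by (rule mpo_diff[OF Ob_sr F G])
    have "F - G \<in> I0 Ob u" unfolding I0u using HO eq ev_diff by simp
    then have "sigma0 c (F - G) \<in> I0 Ob u" using pres by blast
    then have "mpeval (sigma0 c (F - G)) (mfun u) = 0" unfolding I0u by simp
    then show ?thesis unfolding mpeval_sigma0 ev_diff by simp
  qed
  have inj: "mpeval F (mfun u) = mpeval G (mfun u)"
    if F: "mp_over Ob F" and G: "mp_over Ob G" and eq: "mpeval F (mfun (u ** c)) = mpeval G (mfun (u ** c))" for F G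
  proof -
    have HO: "mp_over Ob (F - G)" by (rule mpo_diff[OF Ob_sr F G])
    have "sigma0 c (F - G) \<in> I0 Ob u" unfolding I0u
      using mpo_sigma0[OF Ob_sr HO cOe] eq by (simp add: mpeval_sigma0 ev_diff)
    then obtain K where K: "K \<in> I0 Ob u" and eqK: "sigma0 c (F - G) = sigma0 c K"
      using pres by (metis imageE)
    have "mpeval (F - G) (mfun u) = mpeval (sigma0 c (F - G)) (mfun (u ** B))"
      by (simp add: mpeval_sigma0 matrix_mul_assoc[symmetric] B(3))
    also have "\<dots> = mpeval (sigma0 c K) (mfun (u ** B))" using eqK by simp
    also have "\<dots> = mpeval K (mfun u)"
      by (simp add: mpeval_sigma0 matrix_mul_assoc[symmetric] B(3))
    also have "\<dots> = 0" using K unfolding I0u by simp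
    finally show ?thesis by (simp add: ev_diff)
  qed
  define \<sigma> where "\<sigma> x = mpeval (SOME F. mp_over Ob F \<and> x = mpeval F (mfun u)) (mfun (u ** c))" for x
  have sig: "\<sigma> (mpeval F (mfun u)) = mpeval F (mfun (u ** c))" if F: "mp_over Ob F" for F
  proof -
    let ?G = "SOME G. mp_over Ob G \<and> mpeval F (mfun u) = mpeval G (mfun u)"
    have "\<exists>G. mp_over Ob G \<and> mpeval F (mfun u) = mpeval G (mfun u)" using F by blast
    then have G: "mp_over Ob ?G \<and> mpeval F (mfun u) = mpeval ?G (mfun u)" by (rule someI_ex)
    then have "mpeval ?G (mfun (u ** c)) = mpeval F (mfun (u ** c))"
      by (intro wd[OF conjunct1[OF G] F conjunct2[OF G, symmetric]])
    then show ?thesis by (simp add: \<sigma>_def)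
  qed
  have ev_add: "mpeval (F + G) y = mpeval F y + mpeval G y" for F G :: "('n \<times> 'n, 'a) mpoly" and y
    by (simp add: mpeval_evalh evalh_add[OF rhom_id])
  have ev_mult: "mpeval (F * G) y = mpeval F y * mpeval G y" for F G :: "('n \<times> 'n, 'a) mpoly" and y
    by (simp add: mpeval_evalh evalh_mult[OF rhom_id])
  have img: "mpeval F (mfun (u ** c)) \<in> AA" if F: "mp_over Ob F" for F
    using mpeval_AA[OF mpo_sigma0[OF Ob_sr F cOe]] by (simp add: mpeval_sigma0)
  have aut: "O_alg_aut Ob AA \<sigma>"
    unfolding O_alg_aut_def
  proof (intro conjI ballI)
    show "bij_betw \<sigma> AA AA"
    proof (rule bij_betw_imageI)
      show "inj_on \<sigma> AA"
      proof (rule inj_onI)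
        fix x y assume x: "x \<in> AA" and y: "y \<in> AA" and e: "\<sigma> x = \<sigma> y"
        obtain F where F: "mp_over Ob F" "x = mpeval F (mfun u)" using AA_char[OF x] by blast
        obtain G where G: "mp_over Ob G" "y = mpeval G (mfun u)" using AA_char[OF y] by blast
        show "x = y" using e inj[OF F(1) G(1)] F G sig by simp
      qed
      show "\<sigma> ` AA = AA"
      proof
        show "\<sigma> ` AA \<subseteq> AA"
        proof
          fix z assume "z \<in> \<sigma> ` AA"
          then obtain x where x: "x \<in> AA" "z = \<sigma> x" by blast
          obtain F where F: "mp_over Ob F" "x = mpeval F (mfun u)" using AA_char[OF x(1)] by blast
          show "z \<in> AA" using x(2) F sig img by simp
        qed
        show "AA \<subseteq> \<sigma> ` AA"
        proof
          fix x assume x: "x \<in> AA"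
          obtain G where G: "mp_over Ob G" "x = mpeval G (mfun u)" using AA_char[OF x] by blast
          define F where "F = sigma0 B G"
          have FO: "mp_over Ob F" unfolding F_def by (rule mpo_sigma0[OF Ob_sr G(1) B(1)])
          have "\<sigma> (mpeval F (mfun u)) = mpeval F (mfun (u ** c))" by (rule sig[OF FO])
          also have "\<dots> = mpeval G (mfun ((u ** c) ** B))" unfolding F_def mpeval_sigma0 ..
          also have "\<dots> = x" using G(2) by (simp add: matrix_mul_assoc[symmetric] B(2))
          finally have "\<sigma> (mpeval F (mfun u)) = x" .
          then show "x \<in> \<sigma> ` AA" using mpeval_AA[OF FO] by blast
        qed
      qed
    qed
    fix a b assume a: "a \<in> AA" and b: "b \<in> AA"
    obtain F where F: "mp_over Ob F" "a = mpeval F (mfun u)" using AA_char[OF a] by blast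
    obtain G where G: "mp_over Ob G" "b = mpeval G (mfun u)" using AA_char[OF b] by blast
    show "\<sigma> (a + b) = \<sigma> a + \<sigma> b"
      using sig[OF mpo_add[OF Ob_sr F(1) G(1)]] sig[OF F(1)] sig[OF G(1)] F(2) G(2) ev_add by simp
    show "\<sigma> (a * b) = \<sigma> a * \<sigma> b"
      using sig[OF mpo_mult[OF Ob_sr F(1) G(1)]] sig[OF F(1)] sig[OF G(1)] F(2) G(2) ev_mult by simp
  next
    fix a assume a: "a \<in> Ob"
    have e: "mpeval (mpC a) y = a" for y :: "'n \<times> 'n \<Rightarrow> 'a"
      by (simp add: mpeval_evalh evalh_mpC[OF rhom_id])
    show "\<sigma> a = a" using sig[OF mpo_mpC[OF Ob_sr a]] e by simp
  qed
  have su: "mat_map \<sigma> u = u ** c"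
  proof -
    have e: "mpeval (mpX (i, j)) y = y (i, j)" for y :: "'n \<times> 'n \<Rightarrow> 'a" and i j
      by (simp add: mpeval_evalh evalh_mpX[OF rhom_id])
    have "\<sigma> (u $ i $ j) = (u ** c) $ i $ j" for i j
      using sig[OF mpo_mpX[OF Ob_sr, of "(i, j)"]] e[of i j "mfun u"] e[of i j "mfun (u ** c)"]
      by (simp add: mfun_def)
    then show ?thesis by (simp add: vec_eq_iff)
  qed
  have cW: "c \<in> Gw p \<phi> u" by (rule Ndelta_Gw[OF w cN])
  have "\<sigma> \<in> Gtilde p \<phi> Ob u" by (rule part3_core[OF aut su cO cW])
  then show ?thesis using su by (auto simp: Grel_def)
qed

lemma part1:
  "(\<exists>i. alg_indep Ob (\<lambda>j. u $ i $ j)) \<longrightarrow>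
        Grel p \<phi> Ob u \<subseteq> Ndelta p \<phi> \<and> Grel p \<phi> Ob u = Ndelta p \<phi> \<inter> Sigma0 Ob u"
proof
  assume "\<exists>i. alg_indep Ob (\<lambda>j. u $ i $ j)"
  then obtain i where ai: "alg_indep Ob (\<lambda>j. u $ i $ j)" by blast
  have sub: "Grel p \<phi> Ob u \<subseteq> Ndelta p \<phi>"
  proof
    fix c assume cG: "c \<in> Grel p \<phi> Ob u"
    show "c \<in> Ndelta p \<phi>" by (rule indep_Ndelta[OF ai _ _ cG, where vr = "\<lambda>k. k"]) (simp_all add: inj_on_def)
  qed
  moreover have "Grel p \<phi> Ob u = Ndelta p \<phi> \<inter> Sigma0 Ob u"
    using sub Grel_Sigma0 Sigma0_Grel by blast
  ultimately show "Grel p \<phi> Ob u \<subseteq> Ndelta p \<phi> \<and> Grel p \<phi> Ob u = Ndelta p \<phi> \<inter> Sigma0 Ob u" ..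
qed

lemma part2:
  "alg_indep Ob (\<lambda>(i, j). u $ i $ j) \<longrightarrow> Grel p \<phi> Ob u = Ndelta p \<phi> \<inter> {c. in_GL Ob c}"
proof
  assume ai: "alg_indep Ob (\<lambda>(i, j). u $ i $ j)"
  obtain i0 :: 'n where True by simp
  have injv: "inj (\<lambda>k::'n. (i0, k))" by (auto simp: inj_def)
  show "Grel p \<phi> Ob u = Ndelta p \<phi> \<inter> {c. in_GL Ob c}"
  proof
    show "Grel p \<phi> Ob u \<subseteq> Ndelta p \<phi> \<inter> {c. in_GL Ob c}"
    proof
      fix c assume cG: "c \<in> Grel p \<phi> Ob u"
      have "c \<in> Ndelta p \<phi>" by (rule indep_Ndelta[OF ai injv _ cG]) simp
      then show "c \<in> Ndelta p \<phi> \<inter> {c. in_GL Ob c}" using Grel_props(1)[OF cG] by blast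
    qed
    show "Ndelta p \<phi> \<inter> {c. in_GL Ob c} \<subseteq> Grel p \<phi> Ob u"
    proof
      fix c :: "'a^'n^'n" assume c: "c \<in> Ndelta p \<phi> \<inter> {c. in_GL Ob c}"
      have I0z: "I0 Ob u = {0}"
      proof
        show "I0 Ob u \<subseteq> {0}" using ai by (auto simp: I0_def alg_indep_def)
        show "{0} \<subseteq> I0 Ob u" using sr_0[OF Ob_sr] by (simp add: I0_def mp_over_def mpeval_def)
      qed
      have "sigma0 c 0 = 0" by (simp add: sigma0_evalh evalh_zero)
      then have "c \<in> Sigma0 Ob u" using c by (simp add: Sigma0_def I0z)
      then show "c \<in> Grel p \<phi> Ob u" using Sigma0_Grel c by blast
    qed
  qed
qed

lemma part3:
  "\<forall>\<sigma> c. O_alg_aut Ob (ring_gen Ob (entries u)) \<sigma> \<and> mat_map \<sigma> u = u ** c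
        \<and> in_GL Ob c \<and> c \<in> Gw p \<phi> u \<longrightarrow> c \<in> Grel p \<phi> Ob u"
proof (intro allI impI)
  fix \<sigma> c assume h: "O_alg_aut Ob (ring_gen Ob (entries u)) \<sigma> \<and> mat_map \<sigma> u = u ** c
        \<and> in_GL Ob c \<and> c \<in> Gw p \<phi> u"
  then have "\<sigma> \<in> Gtilde p \<phi> Ob u" using part3_core by blast
  then show "c \<in> Grel p \<phi> Ob u" using h by (auto simp: Grel_def)
qed

lemma part4:
  "CARD('n) = 1 \<longrightarrow> Grel p \<phi> Ob u \<subseteq> Ndelta p \<phi> \<and> Ndelta p \<phi> = (Gdelta p \<phi> :: ('a^'n^'n) set)"
proof
  assume n1: "CARD('n) = 1"
  have "Grel p \<phi> Ob u \<subseteq> Ndelta p \<phi>"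
  proof
    fix c assume "c \<in> Grel p \<phi> Ob u"
    then have "c \<in> Gw p \<phi> u" by (rule Grel_props(2))
    then show "c \<in> Ndelta p \<phi>" by (rule part4_Gw[OF w n1 uinv])
  qed
  then show "Grel p \<phi> Ob u \<subseteq> Ndelta p \<phi> \<and> Ndelta p \<phi> = (Gdelta p \<phi> :: ('a^'n^'n) set)"
    using part4_eq[OF w n1] by blast
qed

lemma part5: "(\<Inter>w\<in>{w. in_GL UNIV w}. Gw p \<phi> w) = (Ndelta p \<phi> :: ('a^'n^'n) set)"
proof
  show "(\<Inter>w\<in>{w. in_GL UNIV w}. Gw p \<phi> w) \<subseteq> (Ndelta p \<phi> :: ('a^'n^'n) set)"
    using part5_sub[OF w] by blast
  show "(Ndelta p \<phi> :: ('a^'n^'n) set) \<subseteq> (\<Inter>w\<in>{w. in_GL UNIV w}. Gw p \<phi> w)"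
    using Ndelta_Gw[OF w] by blast
qed

end

theorem lemma3p5:
  fixes p :: nat and \<phi> :: "'a::idom \<Rightarrow> 'a" and \<O> :: "'a set"
    and \<alpha> u :: "'a^'n^'n"
  assumes "witt_frame p \<phi>"
    and "delta_subring p \<phi> \<O>"
    and "\<forall>i j. \<alpha> $ i $ j \<in> \<O>"
    and "in_GL UNIV u"
    and "mat_map (delta p \<phi>) u = \<alpha> ** frob_pow p u"
  shows
   "((\<exists>i. alg_indep \<O> (\<lambda>j. u $ i $ j)) \<longrightarrow>
        Grel p \<phi> \<O> u \<subseteq> Ndelta p \<phi> \<and> Grel p \<phi> \<O> u = Ndelta p \<phi> \<inter> Sigma0 \<O> u)
  \<and> (alg_indep \<O> (\<lambda>(i, j). u $ i $ j) \<longrightarrow> Grel p \<phi> \<O> u = Ndelta p \<phi> \<inter> {c. in_GL \<O> c})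
  \<and> (\<forall>\<sigma> c. O_alg_aut \<O> (ring_gen \<O> (entries u)) \<sigma> \<and> mat_map \<sigma> u = u ** c
        \<and> in_GL \<O> c \<and> c \<in> Gw p \<phi> u \<longrightarrow> c \<in> Grel p \<phi> \<O> u)
  \<and> (CARD('n) = 1 \<longrightarrow> Grel p \<phi> \<O> u \<subseteq> Ndelta p \<phi> \<and> Ndelta p \<phi> = (Gdelta p \<phi> :: ('a^'n^'n) set))
  \<and> (\<Inter>w\<in>{w. in_GL UNIV w}. Gw p \<phi> w) = (Ndelta p \<phi> :: ('a^'n^'n) set)"
proof -
  interpret L: lset p \<phi> \<O> \<alpha> u using assms by (unfold_locales) auto
  show ?thesis using L.part1 L.part2 L.part3 L.part4 L.part5 by blast
qed


end
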